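(* Let $b_s$ be a finite bridge and let $V$ be a uniform random variable on $[0,1]$ independent of $b_s$. Let $(H_i)$ be the (finitely many) holes of $b_s$ and $H=\bigcup_iH_i$. Then there exists a uniform random variable $U$ on $[0,1]$ such that $U<\mathscr{D}(b_s)$ if and only if $V\notin H$.
   Context: For $s=(s_i)$ with $s_1\ge s_2\ge\dots\ge0$, $\sum_i s_i\le1$, $s_0=1-\sum_is_i$, and i.i.d. uniform $(U_i)$ independent of $s$, the $s$-bridge is $b_s(y)=s_0y+\sum_is_i\mathbf{1}\{U_i\le y\}$; it is a finite bridge if only finitely many $s_i$ are nonzero. A hole of a finite bridge $b_s$ is a maximal connected component of $[0,1]\setminus b_s([0,1])$ (a half-open interval). $\mathscr{D}(b_s)$ is the dust $1-\sum_B\mathrm{freq}(B)$ of the exchangeable paintbox partition $\{i\sim j\iff b_s^{-1}(V_i)=b_s^{-1}(V_j)\}$, where $(V_i)$ are i.i.d. uniform independent of everything, $b_s^{-1}(y)=\inf\{z:b_s(z)>y\}$, and $\mathrm{freq}(B)=\lim_k|B\cap\{1,\dots,k\}|/k$. *)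

theory Defs
  imports "HOL-Probability.Probability"
begin

text \<open>A ranked mass partition s = (s_1, s_2, ...) is represented by s :: nat => real,
  with s 0 standing for s_1, s 1 for s_2, etc.  Finite bridges: only finitely many
  nonzero entries.\<close>

definition finite_ranked_partition :: "(nat \<Rightarrow> real) \<Rightarrow> bool" where
  "finite_ranked_partition s \<longleftrightarrow>
     (\<forall>i. s (Suc i) \<le> s i) \<and> (\<forall>i. 0 \<le> s i) \<and>
     finite {i. s i \<noteq> 0} \<and> (\<Sum>i\<in>{i. s i \<noteq> 0}. s i) \<le> 1"

definition s0 :: "(nat \<Rightarrow> real) \<Rightarrow> real" where
  "s0 s = 1 - (\<Sum>i\<in>{i. s i \<noteq> 0}. s i)"

definition bridge :: "(nat \<Rightarrow> real) \<Rightarrow> (nat \<Rightarrow> real) \<Rightarrow> real \<Rightarrow> real" where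
  "bridge s u y = s0 s * y + (\<Sum>i\<in>{i. s i \<noteq> 0}. s i * indicator {u i..} y)"

definition holes :: "(real \<Rightarrow> real) \<Rightarrow> real set set" where
  "holes f = {connected_component_set ({0..1} - f ` {0..1}) x | x. x \<in> {0..1} - f ` {0..1}}"

definition hole_union :: "(real \<Rightarrow> real) \<Rightarrow> real set" where
  "hole_union f = \<Union>(holes f)"

definition binv :: "(real \<Rightarrow> real) \<Rightarrow> real \<Rightarrow> real" where
  "binv f y = Inf {z\<in>{0..1}. f z > y}"

definition paintbox_blocks :: "(real \<Rightarrow> real) \<Rightarrow> (nat \<Rightarrow> real) \<Rightarrow> nat set set" where
  "paintbox_blocks f v = {{j. binv f (v j) = binv f (v i)} | i. True}"

definition freq :: "nat set \<Rightarrow> real" where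
  "freq B = lim (\<lambda>k. real (card (B \<inter> {..<k})) / real k)"

definition dust :: "(real \<Rightarrow> real) \<Rightarrow> (nat \<Rightarrow> real) \<Rightarrow> real" where
  "dust f v = 1 - (\<Sum>\<^sub>\<infinity>B\<in>paintbox_blocks f v. freq B)"

text \<open>Indices for the family of real random variables: U_k, V_k (paintbox), and V.\<close>
datatype ridx = UI nat | VI nat | VV

definition rvfam :: "(nat \<Rightarrow> 'a \<Rightarrow> real) \<Rightarrow> (nat \<Rightarrow> 'a \<Rightarrow> real) \<Rightarrow> ('a \<Rightarrow> real) \<Rightarrow> ridx \<Rightarrow> 'a \<Rightarrow> real" where
  "rvfam Us Vs V i = (case i of UI k \<Rightarrow> Us k | VI k \<Rightarrow> Vs k | VV \<Rightarrow> V)"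

end

theory Submission
  imports Defs
begin

definition ival :: "real \<Rightarrow> real \<Rightarrow> real" where
  "ival p q = measure lborel ({p..q} \<inter> {0..1})"

definition cnt :: "(nat \<Rightarrow> real) \<Rightarrow> real set \<Rightarrow> nat \<Rightarrow> real" where
  "cnt v L k = real (card ({j. v j \<in> L} \<inter> {..<k})) / real k"

definition slln_ok :: "(nat \<Rightarrow> real) \<Rightarrow> bool" where
  "slln_ok v \<longleftrightarrow> (\<forall>p\<in>\<rat>. \<forall>q\<in>\<rat>. cnt v {p..q} \<longlonglongrightarrow> ival p q)"

lemma ival_le: "p \<le> q \<Longrightarrow> ival p q \<le> q - p"
proof -
  assume "p \<le> q"
  have "measure lborel ({p..q} \<inter> {0..1}) \<le> measure lborel {p..q}"
    using \<open>p \<le> q\<close> by (intro measure_mono_fmeasurable) (auto simp: fmeasurable_def)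
  then show ?thesis using \<open>p \<le> q\<close> by (simp add: ival_def)
qed

lemma ival_eq: "0 \<le> p \<Longrightarrow> p \<le> q \<Longrightarrow> q \<le> 1 \<Longrightarrow> ival p q = q - p"
proof -
  assume "0 \<le> p" "p \<le> q" "q \<le> 1"
  then have "{p..q} \<inter> {0..1} = {p..q}" by auto
  then show ?thesis using \<open>p \<le> q\<close> by (simp add: ival_def)
qed

lemma cnt_nonneg: "0 \<le> cnt v L k"
  by (simp add: cnt_def)

lemma cnt_mono: "L \<subseteq> L' \<Longrightarrow> cnt v L k \<le> cnt v L' k"
  unfolding cnt_def
  by (intro divide_right_mono) (auto intro!: card_mono)

lemma cnt_squeeze:
  assumes slln: "slln_ok v"
    and ab: "0 \<le> a" "a \<le> b" "b \<le> 1" and L: "{a<..<b} \<subseteq> L" "L \<subseteq> {a..b}"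
  shows "cnt v L \<longlonglongrightarrow> b - a"
proof (rule order_tendstoI)
  fix c assume c: "c > b - a"
  define d where "d = c - (b - a)"
  have d: "d > 0" using c by (simp add: d_def)
  obtain p where p: "p \<in> \<rat>" "a - d/3 < p" "p < a"
    using Rats_dense_in_real[of "a - d/3" a] d by auto
  obtain q where q: "q \<in> \<rat>" "b < q" "q < b + d/3"
    using Rats_dense_in_real[of b "b + d/3"] d by auto
  have "cnt v {p..q} \<longlonglongrightarrow> ival p q" using slln p q by (auto simp: slln_ok_def)
  moreover have "ival p q < c"
  proof -
    have "ival p q \<le> q - p" using ival_le[of p q] p q ab by auto
    then show ?thesis using p q c d_def by linarith
  qed
  ultimately have "eventually (\<lambda>k. cnt v {p..q} k < c) sequentially"
    by (rule order_tendstoD)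
  then show "eventually (\<lambda>k. cnt v L k < c) sequentially"
  proof (rule eventually_mono)
    fix k assume "cnt v {p..q} k < c"
    moreover have "L \<subseteq> {p..q}" using L p q by auto
    ultimately show "cnt v L k < c" using cnt_mono[of L "{p..q}" v k] by linarith
  qed
next
  fix c assume c: "c < b - a"
  show "eventually (\<lambda>k. c < cnt v L k) sequentially"
  proof (cases "c < 0")
    case True then show ?thesis using cnt_nonneg[of v L]
      by (intro always_eventually) (auto intro: less_le_trans)
  next
    case False
    define d where "d = b - a - c"
    have d: "d > 0" using c by (simp add: d_def)
    obtain p where p: "p \<in> \<rat>" "a < p" "p < a + d/3"
      using Rats_dense_in_real[of a "a + d/3"] d by auto
    obtain q where q: "q \<in> \<rat>" "b - d/3 < q" "q < b"
      using Rats_dense_in_real[of "b - d/3" b] d by auto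
    have pq: "p \<le> q" using p q False d d_def by linarith
    have "cnt v {p..q} \<longlonglongrightarrow> ival p q" using slln p q by (auto simp: slln_ok_def)
    moreover have "c < ival p q"
    proof -
      have "ival p q = q - p" using ival_eq[of p q] p q ab pq by auto
      then show ?thesis using p q c d_def by linarith
    qed
    ultimately have "eventually (\<lambda>k. c < cnt v {p..q} k) sequentially"
      by (rule order_tendstoD)
    then show ?thesis
    proof (rule eventually_mono)
      fix k assume "c < cnt v {p..q} k"
      moreover have "{p..q} \<subseteq> L" using L p q by auto
      ultimately show "c < cnt v L k" using cnt_mono[of "{p..q}" L v k] by linarith
    qed
  qed
qed

definition aa :: "(nat \<Rightarrow> real) \<Rightarrow> (nat \<Rightarrow> real) \<Rightarrow> nat \<Rightarrow> real" where
  "aa \<sigma> u i = s0 \<sigma> * u i + (\<Sum>j\<in>{j. \<sigma> j \<noteq> 0}. \<sigma> j * (if u j < u i then 1 else 0))"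

definition Hop :: "(nat \<Rightarrow> real) \<Rightarrow> (nat \<Rightarrow> real) \<Rightarrow> real set" where
  "Hop \<sigma> u = {y. \<exists>i. \<sigma> i \<noteq> 0 \<and> aa \<sigma> u i < y \<and> y < aa \<sigma> u i + \<sigma> i}"

definition Eend :: "(nat \<Rightarrow> real) \<Rightarrow> (nat \<Rightarrow> real) \<Rightarrow> real set" where
  "Eend \<sigma> u = {y. \<exists>i. \<sigma> i \<noteq> 0 \<and> (y = aa \<sigma> u i \<or> y = aa \<sigma> u i + \<sigma> i)}"

locale det =
  fixes \<sigma> u :: "nat \<Rightarrow> real"
  assumes frp: "finite_ranked_partition \<sigma>"
    and u01: "\<And>i. \<sigma> i \<noteq> 0 \<Longrightarrow> 0 < u i \<and> u i < 1"
    and uinj: "inj_on u {i. \<sigma> i \<noteq> 0}"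
begin

abbreviation "N \<equiv> {i. \<sigma> i \<noteq> 0}"
abbreviation "f \<equiv> bridge \<sigma> u"

lemma finN: "finite N" using frp by (simp add: finite_ranked_partition_def)
lemma sig_nn: "0 \<le> \<sigma> i" using frp by (simp add: finite_ranked_partition_def)
lemma sig_pos: "i \<in> N \<Longrightarrow> 0 < \<sigma> i" using sig_nn[of i] by auto
lemma s0_nn: "0 \<le> s0 \<sigma>" using frp by (simp add: finite_ranked_partition_def s0_def)
lemma sumN: "(\<Sum>i\<in>N. \<sigma> i) = 1 - s0 \<sigma>" by (simp add: s0_def)

lemma f_def': "f x = s0 \<sigma> * x + (\<Sum>j\<in>N. \<sigma> j * indicator {u j..} x)"
  by (simp add: bridge_def)

lemma f_mono: "x \<le> y \<Longrightarrow> f x \<le> f y"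
  unfolding f_def'
  by (intro add_mono mult_left_mono sum_mono s0_nn sig_nn)
     (auto simp: indicator_def)

lemma f0: "f 0 = 0"
proof -
  have "(\<Sum>j\<in>N. \<sigma> j * indicator {u j..} (0::real)) = 0"
    by (intro sum.neutral) (auto simp: indicator_def dest: u01)
  then show ?thesis unfolding f_def' by simp
qed

lemma f1: "f 1 = 1"
proof -
  have "(\<Sum>j\<in>N. \<sigma> j * indicator {u j..} (1::real)) = (\<Sum>j\<in>N. \<sigma> j)"
    by (intro sum.cong) (auto simp: indicator_def dest: u01)
  then show ?thesis unfolding f_def' by (simp add: sumN)
qed

lemma f01: "0 \<le> x \<Longrightarrow> x \<le> 1 \<Longrightarrow> 0 \<le> f x \<and> f x \<le> 1"
  using f_mono[of 0 x] f_mono[of x 1] f0 f1 by auto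

lemma f_at: assumes i: "i \<in> N" shows "f (u i) = aa \<sigma> u i + \<sigma> i"
proof -
  have "(\<Sum>j\<in>N. \<sigma> j * indicator {u j..} (u i)) =
        (\<Sum>j\<in>N. \<sigma> j * (if u j < u i then 1 else 0) + (if j = i then \<sigma> j else 0))"
  proof (intro sum.cong refl)
    fix j assume j: "j \<in> N"
    show "\<sigma> j * indicator {u j..} (u i) = \<sigma> j * (if u j < u i then 1 else 0) + (if j = i then \<sigma> j else 0)"
    proof (cases "j = i")
      case True then show ?thesis by (simp add: indicator_def)
    next
      case False
      then have "u j \<noteq> u i" using uinj i j by (auto simp: inj_on_def)
      then show ?thesis using False by (auto simp: indicator_def)
    qed
  qed
  also have "\<dots> = (\<Sum>j\<in>N. \<sigma> j * (if u j < u i then 1 else 0)) + \<sigma> i"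
    using i finN by (simp add: sum.distrib)
  finally show ?thesis unfolding f_def' aa_def by simp
qed

lemma f_le_aa: assumes "x < u i" shows "f x \<le> aa \<sigma> u i"
  unfolding f_def' aa_def
  using assms
  by (intro add_mono mult_left_mono sum_mono s0_nn sig_nn)
     (auto simp: indicator_def intro: mult_left_mono sig_nn)

lemma aa_nn: "i \<in> N \<Longrightarrow> 0 \<le> aa \<sigma> u i"
  unfolding aa_def
  using u01[of i] s0_nn
  by (intro add_nonneg_nonneg sum_nonneg) (auto intro!: mult_nonneg_nonneg sig_nn simp: sig_nn)

lemma aa_le: "i \<in> N \<Longrightarrow> aa \<sigma> u i + \<sigma> i \<le> 1"
  using f_at[of i] f01[of "u i"] u01[of i] by auto

lemma isCont_ind: "z \<noteq> c \<Longrightarrow> isCont (indicator {c..} :: real \<Rightarrow> real) z"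
  by (subst isCont_indicator) auto

lemma isCont_f: "z \<notin> u ` N \<Longrightarrow> isCont f z"
  unfolding f_def'
  by (intro continuous_intros isCont_ind) auto

lemma isCont_g: "i \<in> N \<Longrightarrow>
   isCont (\<lambda>x. s0 \<sigma> * x + (\<Sum>j\<in>N-{i}. \<sigma> j * indicator {u j..} x)) (u i)"
  using uinj by (intro continuous_intros isCont_ind) (auto simp: inj_on_def)

lemma g_eq: "i \<in> N \<Longrightarrow>
   s0 \<sigma> * x + (\<Sum>j\<in>N-{i}. \<sigma> j * indicator {u j..} x) = f x - \<sigma> i * indicator {u i..} x"
proof -
  assume i: "i \<in> N"
  have "(\<Sum>j\<in>N. \<sigma> j * indicator {u j..} x) = \<sigma> i * indicator {u i..} x + (\<Sum>j\<in>N-{i}. \<sigma> j * indicator {u j..} x)"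
    by (rule sum.remove[OF finN i])
  then show ?thesis unfolding f_def' by simp
qed

end

context det begin

lemma binv_props:
  assumes v: "0 \<le> v" "v < 1"
  defines "z \<equiv> binv f v"
  shows "0 \<le> z" "z \<le> 1" "\<And>x. 0 \<le> x \<Longrightarrow> x < z \<Longrightarrow> f x \<le> v"
    "\<And>x. z < x \<Longrightarrow> x \<le> 1 \<Longrightarrow> v < f x"
proof -
  define S where "S = {x\<in>{0..1}. f x > v}"
  have zS: "z = Inf S" by (simp add: z_def binv_def S_def)
  have 1: "1 \<in> S" using v f1 by (simp add: S_def)
  have bdd: "bdd_below S" by (rule bdd_belowI[of _ 0]) (auto simp: S_def)
  show "z \<le> 1" unfolding zS using 1 bdd by (rule cInf_lower)
  show "0 \<le> z" unfolding zS using 1 by (intro cInf_greatest) (auto simp: S_def)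
  show "f x \<le> v" if "0 \<le> x" "x < z" for x
  proof (rule ccontr)
    assume "\<not> f x \<le> v"
    moreover have "x \<le> 1" using that \<open>z \<le> 1\<close> by simp
    ultimately have "x \<in> S" using that by (auto simp: S_def)
    then have "z \<le> x" unfolding zS using bdd by (rule cInf_lower)
    then show False using that by simp
  qed
  show "v < f x" if "z < x" "x \<le> 1" for x
  proof -
    from that have "Inf S < x" by (simp add: zS)
    then obtain y where "y \<in> S" "y < x" using cInf_less_iff[of S x] 1 bdd by auto
    then show ?thesis using f_mono[of y x] by (auto simp: S_def)
  qed
qed

lemma binv_atom:
  assumes v: "0 \<le> v" "v < 1" and i: "i \<in> N" and z: "binv f v = u i"
  shows "aa \<sigma> u i \<le> v" "v \<le> aa \<sigma> u i + \<sigma> i"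
proof -
  define g where "g x = s0 \<sigma> * x + (\<Sum>j\<in>N-{i}. \<sigma> j * indicator {u j..} x)" for x
  have gc: "isCont g (u i)" unfolding g_def by (rule isCont_g[OF i])
  have geq: "g x = f x - \<sigma> i * indicator {u i..} x" for x unfolding g_def by (rule g_eq[OF i])
  have gu: "g (u i) = aa \<sigma> u i" using geq[of "u i"] f_at[OF i] by simp
  have ui: "0 < u i" "u i < 1" using u01 i by auto
  have "(g \<longlongrightarrow> g (u i)) (at_left (u i))"
    using gc by (simp add: isCont_def filterlim_at_split)
  moreover have "eventually (\<lambda>x. g x \<le> v) (at_left (u i))"
  proof -
    have "eventually (\<lambda>x. x \<in> {0<..<u i}) (at_left (u i))"
      using ui by (intro eventually_at_left_real) auto
    then show ?thesis
    proof eventually_elim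
      case (elim x)
      then have "f x \<le> v" using binv_props(3)[OF v, of x] z by simp
      then show ?case using geq[of x] elim by (simp add: indicator_def)
    qed
  qed
  ultimately have "g (u i) \<le> v"
    by (intro tendsto_upperbound) (auto simp: trivial_limit_at_left_real)
  then show "aa \<sigma> u i \<le> v" using gu by simp
  have "((\<lambda>x. g x + \<sigma> i) \<longlongrightarrow> g (u i) + \<sigma> i) (at_right (u i))"
    using gc by (intro tendsto_intros) (simp add: isCont_def filterlim_at_split)
  moreover have "eventually (\<lambda>x. v \<le> g x + \<sigma> i) (at_right (u i))"
  proof -
    have "eventually (\<lambda>x. x \<in> {u i<..<1}) (at_right (u i))"
      using ui by (intro eventually_at_right_real) auto
    then show ?thesis
    proof eventually_elim
      case (elim x)
      then have "v < f x" using binv_props(4)[OF v, of x] z by simp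
      then show ?case using geq[of x] elim by (simp add: indicator_def)
    qed
  qed
  ultimately have "v \<le> g (u i) + \<sigma> i"
    by (intro tendsto_lowerbound) (auto simp: trivial_limit_at_right_real)
  then show "v \<le> aa \<sigma> u i + \<sigma> i" using gu by simp
qed

lemma binv_nonatom:
  assumes v: "0 \<le> v" "v < 1" and z: "binv f v \<notin> u ` N"
  shows "v = f (binv f v)"
proof -
  define w where "w = binv f v"
  have w01: "0 \<le> w" "w \<le> 1" using binv_props(1,2)[OF v] by (auto simp: w_def)
  have c: "isCont f w" using isCont_f z by (simp add: w_def)
  have le: "f w \<le> v"
  proof (cases "w = 0")
    case True then show ?thesis using f0 v by simp
  next
    case False
    then have wp: "0 < w" using w01 by simp
    have "(f \<longlongrightarrow> f w) (at_left w)"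
      using c by (simp add: isCont_def filterlim_at_split)
    moreover have "eventually (\<lambda>x. f x \<le> v) (at_left w)"
    proof -
      have "eventually (\<lambda>x. x \<in> {0<..<w}) (at_left w)"
        using wp by (intro eventually_at_left_real) auto
      then show ?thesis
        by eventually_elim (use binv_props(3)[OF v] in \<open>auto simp: w_def\<close>)
    qed
    ultimately show ?thesis
      by (intro tendsto_upperbound) (auto simp: trivial_limit_at_left_real)
  qed
  have ge: "v \<le> f w"
  proof (cases "w = 1")
    case True then show ?thesis using f1 v by simp
  next
    case False
    then have wp: "w < 1" using w01 by simp
    have "(f \<longlongrightarrow> f w) (at_right w)"
      using c by (simp add: isCont_def filterlim_at_split)
    moreover have "eventually (\<lambda>x. v \<le> f x) (at_right w)"
    proof -
      have "eventually (\<lambda>x. x \<in> {w<..<1}) (at_right w)"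
        using wp by (intro eventually_at_right_real) auto
      then show ?thesis
        by eventually_elim (use binv_props(4)[OF v] in \<open>force simp: w_def\<close>)
    qed
    ultimately show ?thesis
      by (intro tendsto_lowerbound) (auto simp: trivial_limit_at_right_real)
  qed
  show ?thesis using le ge by (simp add: w_def)
qed

lemma binv_interior:
  assumes i: "i \<in> N" and v: "aa \<sigma> u i < v" "v < aa \<sigma> u i + \<sigma> i"
  shows "binv f v = u i"
proof -
  have ui: "0 < u i" "u i < 1" using u01 i by auto
  show ?thesis unfolding binv_def
  proof (rule cInf_eq_minimum)
    show "u i \<in> {z \<in> {0..1}. v < f z}" using ui v f_at[OF i] by auto
    fix x assume "x \<in> {z \<in> {0..1}. v < f z}"
    then have "v < f x" by auto
    then show "u i \<le> x" using f_le_aa[of x i] v by (cases "x < u i") auto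
  qed
qed

lemma range_hole:
  assumes i: "i \<in> N" and y: "aa \<sigma> u i < y" "y < aa \<sigma> u i + \<sigma> i"
  shows "y \<notin> f ` {0..1}"
proof
  assume "y \<in> f ` {0..1}"
  then obtain x where x: "y = f x" by auto
  show False
  proof (cases "x < u i")
    case True then show False using f_le_aa[of x i] x y by simp
  next
    case False then have "f (u i) \<le> f x" by (intro f_mono) simp
    then show False using f_at[OF i] x y by simp
  qed
qed

lemma range_in:
  assumes y: "0 \<le> y" "y \<le> 1" and n: "\<And>i. i \<in> N \<Longrightarrow> \<not> (aa \<sigma> u i \<le> y \<and> y \<le> aa \<sigma> u i + \<sigma> i)"
  shows "y \<in> f ` {0..1}"
proof (cases "y = 1")
  case True then show ?thesis using f1 by force
next
  case False
  then have y1: "y < 1" using y by simp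
  show ?thesis
  proof (cases "binv f y \<in> u ` N")
    case True
    then obtain i where i: "i \<in> N" "binv f y = u i" by auto
    then show ?thesis using binv_atom[OF y(1) y1 i] n[OF i(1)] by simp
  next
    case False
    then have "y = f (binv f y)" by (rule binv_nonatom[OF y(1) y1])
    moreover have "binv f y \<in> {0..1}" using binv_props(1,2)[OF y(1) y1] by simp
    ultimately show ?thesis by blast
  qed
qed

lemma hole_union_eq: "hole_union f = {0..1} - f ` {0..1}"
proof -
  have "holes f = connected_component_set ({0..1} - f ` {0..1}) ` ({0..1} - f ` {0..1})"
    unfolding holes_def by blast
  then show ?thesis unfolding hole_union_def
    using Union_connected_component[of "{0..1} - f ` {0..1}"] by simp
qed

lemma hole_iff:
  assumes "y \<notin> Eend \<sigma> u"
  shows "y \<in> hole_union f \<longleftrightarrow> y \<in> Hop \<sigma> u"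
proof
  assume h: "y \<in> hole_union f"
  then have y: "0 \<le> y" "y \<le> 1" "y \<notin> f ` {0..1}" by (auto simp: hole_union_eq)
  then obtain i where i: "i \<in> N" "aa \<sigma> u i \<le> y" "y \<le> aa \<sigma> u i + \<sigma> i"
    using range_in by blast
  then show "y \<in> Hop \<sigma> u" using assms unfolding Hop_def Eend_def by force
next
  assume "y \<in> Hop \<sigma> u"
  then obtain i where i: "i \<in> N" "aa \<sigma> u i < y" "y < aa \<sigma> u i + \<sigma> i"
    unfolding Hop_def by auto
  then have "0 \<le> y" "y \<le> 1" using aa_nn[of i] aa_le[of i] by auto
  then show "y \<in> hole_union f" using range_hole[OF i] by (simp add: hole_union_eq)
qed

end

context det begin

lemma aa_gap:
  assumes i: "i \<in> N" and j: "j \<in> N" and lt: "u i < u j"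
  shows "aa \<sigma> u i + \<sigma> i \<le> aa \<sigma> u j"
proof -
  have "(\<Sum>k\<in>N. \<sigma> k * (if u k < u i then 1 else 0)) + \<sigma> i =
        (\<Sum>k\<in>N. \<sigma> k * (if u k < u i then 1 else 0) + (if k = i then \<sigma> k else 0))"
    using i finN by (simp add: sum.distrib)
  also have "\<dots> \<le> (\<Sum>k\<in>N. \<sigma> k * (if u k < u j then 1 else 0))"
  proof (intro sum_mono)
    fix k assume "k \<in> N"
    show "\<sigma> k * (if u k < u i then 1 else 0) + (if k = i then \<sigma> k else 0) \<le> \<sigma> k * (if u k < u j then 1 else 0)"
      using lt sig_nn[of k] by auto
  qed
  finally have "(\<Sum>k\<in>N. \<sigma> k * (if u k < u i then 1 else 0)) + \<sigma> i \<le> (\<Sum>k\<in>N. \<sigma> k * (if u k < u j then 1 else 0))" .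
  moreover have "s0 \<sigma> * u i \<le> s0 \<sigma> * u j" using lt s0_nn by (intro mult_left_mono) auto
  ultimately show ?thesis unfolding aa_def by linarith
qed

lemma Hop_eq: "Hop \<sigma> u = (\<Union>i\<in>N. {aa \<sigma> u i<..<aa \<sigma> u i + \<sigma> i})"
  unfolding Hop_def by auto

lemma measure_Hop: "measure lborel (Hop \<sigma> u) = 1 - s0 \<sigma>"
proof -
  have "measure lborel (\<Union>i\<in>N. {aa \<sigma> u i<..<aa \<sigma> u i + \<sigma> i}) =
        (\<Sum>i\<in>N. measure lborel {aa \<sigma> u i<..<aa \<sigma> u i + \<sigma> i})"
  proof (rule measure_finite_Union[OF finN])
    show "disjoint_family_on (\<lambda>i. {aa \<sigma> u i<..<aa \<sigma> u i + \<sigma> i}) N"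
      unfolding disjoint_family_on_def
    proof (intro ballI impI)
      fix i j assume i: "i \<in> N" and j: "j \<in> N" and ij: "i \<noteq> j"
      have "u i \<noteq> u j" using uinj i j ij by (auto simp: inj_on_def)
      then consider "u i < u j" | "u j < u i" by linarith
      then show "{aa \<sigma> u i<..<aa \<sigma> u i + \<sigma> i} \<inter> {aa \<sigma> u j<..<aa \<sigma> u j + \<sigma> j} = {}"
      proof cases
        case 1 then show ?thesis using aa_gap[OF i j] by auto
      next
        case 2 then show ?thesis using aa_gap[OF j i] by auto
      qed
    qed
  qed (use sig_nn in auto)
  also have "\<dots> = (\<Sum>i\<in>N. \<sigma> i)"
    by (intro sum.cong refl) (simp add: sig_nn)
  finally show ?thesis by (simp add: Hop_eq sumN)
qed

lemma Hop_sub: "Hop \<sigma> u \<subseteq> {0..1}"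
  unfolding Hop_def using aa_nn aa_le by fastforce

lemma finite_Eend: "finite (Eend \<sigma> u)"
proof -
  have "Eend \<sigma> u = (\<lambda>i. aa \<sigma> u i) ` N \<union> (\<lambda>i. aa \<sigma> u i + \<sigma> i) ` N"
    unfolding Eend_def by auto
  then show ?thesis using finN by simp
qed

end

locale detv = det +
  fixes v :: "nat \<Rightarrow> real"
  assumes v01: "\<And>j. 0 \<le> v j \<and> v j < 1"
    and slln: "slln_ok v"
begin

definition LL :: "real \<Rightarrow> real set" where
  "LL z = {y. 0 \<le> y \<and> y < 1 \<and> binv f y = z}"

definition len :: "real \<Rightarrow> real" where
  "len z = (\<Sum>i\<in>{i\<in>N. u i = z}. \<sigma> i)"

lemma block_eq: "{j. binv f (v j) = z} = {j. v j \<in> LL z}"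
  using v01 by (auto simp: LL_def)

lemma cnt_LL: "cnt v (LL z) \<longlonglongrightarrow> len z"
proof (cases "z \<in> u ` N")
  case True
  then obtain i where i: "i \<in> N" "z = u i" by auto
  have "{i'\<in>N. u i' = z} = {i}" using i uinj by (auto simp: inj_on_def)
  then have l: "len z = \<sigma> i" by (simp add: len_def)
  have "cnt v (LL z) \<longlonglongrightarrow> (aa \<sigma> u i + \<sigma> i) - aa \<sigma> u i"
  proof (rule cnt_squeeze[OF slln])
    show "0 \<le> aa \<sigma> u i" using aa_nn i by simp
    show "aa \<sigma> u i \<le> aa \<sigma> u i + \<sigma> i" using sig_nn by simp
    show "aa \<sigma> u i + \<sigma> i \<le> 1" using aa_le i by simp
    show "{aa \<sigma> u i<..<aa \<sigma> u i + \<sigma> i} \<subseteq> LL z"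
    proof
      fix y assume y: "y \<in> {aa \<sigma> u i<..<aa \<sigma> u i + \<sigma> i}"
      then have "0 \<le> y" "y < 1" using aa_nn[of i] aa_le[of i] i by auto
      then show "y \<in> LL z" using binv_interior[OF i(1)] y i by (auto simp: LL_def)
    qed
    show "LL z \<subseteq> {aa \<sigma> u i..aa \<sigma> u i + \<sigma> i}"
      using binv_atom[OF _ _ i(1)] i by (auto simp: LL_def)
  qed
  then show ?thesis using l by simp
next
  case False
  have l: "len z = 0" using False by (auto simp: len_def intro!: sum.neutral)
  show ?thesis
  proof (cases "LL z = {}")
    case True
    have "cnt v (LL z) \<longlonglongrightarrow> 0 - 0"
      by (rule cnt_squeeze[OF slln]) (auto simp: True)
    then show ?thesis using l by simp
  next
    case ne: False
    then obtain y where y: "y \<in> LL z" by auto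
    then have y01: "0 \<le> y" "y < 1" "binv f y = z" by (auto simp: LL_def)
    have z01: "0 \<le> z" "z \<le> 1" using binv_props(1,2)[OF y01(1,2)] y01 by auto
    have sub: "LL z \<subseteq> {f z}"
    proof
      fix y' assume "y' \<in> LL z"
      then have "0 \<le> y'" "y' < 1" "binv f y' = z" by (auto simp: LL_def)
      then show "y' \<in> {f z}" using binv_nonatom[of y'] False by auto
    qed
    have "cnt v (LL z) \<longlonglongrightarrow> f z - f z"
      by (rule cnt_squeeze[OF slln]) (use f01[OF z01] sub in auto)
    then show ?thesis using l by simp
  qed
qed

lemma freq_block: "freq {j. binv f (v j) = z} = len z"
  unfolding freq_def block_eq by (rule limI) (use cnt_LL[of z] in \<open>simp add: cnt_def[abs_def]\<close>)

lemma atom_hit: assumes i: "i \<in> N" shows "\<exists>j. binv f (v j) = u i"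
proof (rule ccontr)
  assume "\<not> ?thesis"
  then have "LL (u i) \<inter> range v = {}" by (auto simp: LL_def)
  then have "cnt v (LL (u i)) = (\<lambda>_. 0)" by (auto simp: cnt_def fun_eq_iff)
  moreover have "len (u i) = \<sigma> i"
  proof -
    have "{i'\<in>N. u i' = u i} = {i}" using i uinj by (auto simp: inj_on_def)
    then show ?thesis by (simp add: len_def)
  qed
  ultimately have "(\<lambda>_. 0::real) \<longlonglongrightarrow> \<sigma> i" using cnt_LL[of "u i"] by simp
  then have "\<sigma> i = 0" using LIMSEQ_unique tendsto_const by blast
  then show False using i by simp
qed

lemma dust_eq: "dust f v = s0 \<sigma>"
proof -
  define Z where "Z = range (\<lambda>i. binv f (v i))"
  define blk where "blk z = {j. binv f (v j) = z}" for z
  have pb: "paintbox_blocks f v = blk ` Z"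
    unfolding paintbox_blocks_def blk_def Z_def by auto
  have inj: "inj_on blk Z"
  proof
    fix z1 z2 assume "z1 \<in> Z" "z2 \<in> Z" "blk z1 = blk z2"
    then obtain i where "z1 = binv f (v i)" "i \<in> blk z2" by (auto simp: Z_def blk_def)
    then show "z1 = z2" by (simp add: blk_def)
  qed
  have "(\<Sum>\<^sub>\<infinity>B\<in>paintbox_blocks f v. freq B) = (\<Sum>\<^sub>\<infinity>z\<in>Z. freq (blk z))"
    unfolding pb using infsum_reindex[OF inj, of freq] by (simp add: comp_def)
  also have "\<dots> = (\<Sum>\<^sub>\<infinity>z\<in>Z. len z)"
    by (intro infsum_cong) (simp add: blk_def freq_block)
  also have "\<dots> = (\<Sum>\<^sub>\<infinity>z\<in>u ` N. len z)"
  proof (rule infsum_cong_neutral)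
    show "len z = 0" if "z \<in> Z - u ` N" for z
      using that by (auto simp: len_def intro!: sum.neutral)
    show "len z = 0" if "z \<in> u ` N - Z" for z
    proof -
      from that obtain i where "i \<in> N" "z = u i" "z \<notin> Z" by auto
      then have False using atom_hit[of i] unfolding Z_def by (metis rangeI)
      then show ?thesis ..
    qed
  qed simp
  also have "\<dots> = (\<Sum>z\<in>u ` N. len z)" using finN by simp
  also have "\<dots> = (\<Sum>i\<in>N. len (u i))" using uinj by (simp add: sum.reindex)
  also have "\<dots> = (\<Sum>i\<in>N. \<sigma> i)"
  proof (intro sum.cong refl)
    fix i assume i: "i \<in> N"
    have "{i'\<in>N. u i' = u i} = {i}" using i uinj by (auto simp: inj_on_def)
    then show "len (u i) = \<sigma> i" by (simp add: len_def)
  qed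
  finally show ?thesis by (simp add: dust_def sumN)
qed

end

lemma (in prob_space) slln_indicator:
  fixes Z :: "'i \<Rightarrow> 'a \<Rightarrow> real" and e :: "nat \<Rightarrow> 'i" and B :: "real set"
  assumes inj: "inj e" and ind: "indep_vars (\<lambda>_. borel) Z (range e)"
    and dist: "\<And>j. distr M borel (Z (e j)) = distr M borel (Z (e 0))"
    and B: "B \<in> sets borel"
  shows "AE \<omega> in M. (\<lambda>k. real (card ({j. Z (e j) \<omega> \<in> B} \<inter> {..<k})) / real k)
            \<longlonglongrightarrow> prob {\<omega>\<in>space M. Z (e 0) \<omega> \<in> B}"
proof -
  define X where "X = (\<lambda>i \<omega>. (indicator B (Z i \<omega>) :: real))"
  define Y where "Y = X (e 0)"
  have rvZ[measurable]: "\<And>i. i \<in> range e \<Longrightarrow> Z i \<in> borel_measurable M"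
    using ind unfolding indep_vars_def by auto
  have rvZ0[measurable]: "Z (e j) \<in> borel_measurable M" for j using rvZ by auto
  have indX: "indep_vars (\<lambda>_. borel) X (range e)"
    unfolding X_def by (rule indep_vars_compose2[OF ind, where N="\<lambda>_. borel"]) (use B in \<open>auto intro: borel_measurable_indicator\<close>)
  have distX: "distr M borel (X (e j)) = distr M borel Y" for j
  proof -
    have g: "(indicator B :: real \<Rightarrow> real) \<in> borel_measurable borel" using B by simp
    have "distr M borel (X (e j)) = distr (distr M borel (Z (e j))) borel (indicator B)"
      by (subst distr_distr[OF g rvZ0]) (simp add: comp_def X_def)
    also have "\<dots> = distr (distr M borel (Z (e 0))) borel (indicator B)" by (simp only: dist[of j])
    also have "\<dots> = distr M borel Y"
      by (subst distr_distr[OF g rvZ0]) (simp add: comp_def X_def Y_def)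
    finally show ?thesis .
  qed
  have rvY[measurable]: "Y \<in> borel_measurable M" unfolding Y_def X_def using B by measurable
  have EY: "expectation Y = prob {\<omega>\<in>space M. Z (e 0) \<omega> \<in> B}"
  proof -
    have "expectation Y = expectation (indicator {\<omega>\<in>space M. Z (e 0) \<omega> \<in> B})"
      by (intro Bochner_Integration.integral_cong) (auto simp: Y_def X_def indicator_def)
    also have "\<dots> = prob {\<omega>\<in>space M. Z (e 0) \<omega> \<in> B}"
      by (simp add: Int_absorb2)
    finally show ?thesis .
  qed
  define m0 where "m0 = expectation Y"
  define S where "S k \<omega> = (\<Sum>j<k. X (e j) \<omega>)" for k \<omega>
  have S_eq: "S k \<omega> = real (card ({j. Z (e j) \<omega> \<in> B} \<inter> {..<k}))" for k \<omega>
  proof -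
    have "S k \<omega> = (\<Sum>j\<in>{..<k}. indicator {j. Z (e j) \<omega> \<in> B} j)"
      by (simp add: S_def X_def indicator_def)
    also have "\<dots> = real (card ({..<k} \<inter> {j. Z (e j) \<omega> \<in> B}))"
    proof -
      have "real (card ({..<k} \<inter> {j. Z (e j) \<omega> \<in> B})) = (\<Sum>j\<in>{..<k} \<inter> {j. Z (e j) \<omega> \<in> B}. 1)" by simp
      also have "\<dots> = (\<Sum>j\<in>{..<k}. indicator {j. Z (e j) \<omega> \<in> B} j :: real)"
        by (simp only: sum.inter_restrict[OF finite_lessThan]) (intro sum.cong, auto simp: indicator_def)
      finally show ?thesis ..
    qed
    finally show ?thesis by (simp add: Int_commute)
  qed
  have main: "AE \<omega> in M. eventually (\<lambda>k. \<bar>S k \<omega> / real k - m0\<bar> < \<epsilon>) sequentially"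
    if \<epsilon>: "\<epsilon> > 0" for \<epsilon>
  proof -
    define A where "A n = {\<omega>\<in>space M. \<bar>S (Suc n) \<omega> / real (Suc n) - m0\<bar> \<ge> \<epsilon>}" for n
    have A_sets[measurable]: "A n \<in> sets M" for n unfolding A_def S_def X_def using B by measurable
    have A_bound: "prob (A n) \<le> 2 * exp (-2 * \<epsilon>\<^sup>2) ^ Suc n" for n
    proof -
      interpret H: Hoeffding_ineq_iid M "e ` {..<Suc n}" X Y 0 1 "expectation Y"
      proof unfold_locales
        show "finite (e ` {..<Suc n})" by simp
        show "indep_vars (\<lambda>_. borel) X (e ` {..<Suc n})"
          by (rule indep_vars_subset[OF indX]) auto
        show "distr M borel (X i) = distr M borel Y" if "i \<in> e ` {..<Suc n}" for i
          using that distX by auto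
        show "AE x in M. Y x \<in> {0..1}" by (auto simp: Y_def X_def indicator_def)
      qed simp_all
      have card: "card (e ` {..<Suc n}) = Suc n" using inj by (simp add: card_image inj_on_subset)
      have "prob {x\<in>space M. \<bar>(\<Sum>i\<in>e ` {..<Suc n}. X i x) / real (card (e ` {..<Suc n})) - expectation Y\<bar> \<ge> \<epsilon>}
            \<le> 2 * exp (-2 * real (card (e ` {..<Suc n})) * \<epsilon>\<^sup>2 / (1 - 0)\<^sup>2)"
        using \<epsilon> by (intro H.Hoeffding_ineq_abs_ge') auto
      moreover have "(\<Sum>i\<in>e ` {..<Suc n}. X i x) = S (Suc n) x" for x
        unfolding S_def using inj by (subst sum.reindex) (auto intro: inj_on_subset)
      moreover have "exp (-2 * real (Suc n) * \<epsilon>\<^sup>2) = exp (-2 * \<epsilon>\<^sup>2) ^ Suc n"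
        using exp_of_nat_mult[of "Suc n" "-2 * \<epsilon>\<^sup>2"] by (simp add: algebra_simps)
      ultimately show ?thesis unfolding A_def card m0_def by simp
    qed
    have sum: "summable (\<lambda>n. measure M (A n))"
    proof (rule summable_comparison_test)
      show "\<exists>N. \<forall>n\<ge>N. norm (measure M (A n)) \<le> 2 * exp (-2 * \<epsilon>\<^sup>2) ^ Suc n"
        using A_bound by auto
      have "exp (-2 * \<epsilon>\<^sup>2) < 1" using \<epsilon> by simp
      then show "summable (\<lambda>n. 2 * exp (-2 * \<epsilon>\<^sup>2) ^ Suc n)"
        by (intro summable_mult summable_ignore_initial_segment[where k=1, simplified]
            summable_geometric) auto
    qed
    have "AE x in M. eventually (\<lambda>n. x \<in> space M - A n) sequentially"
      by (rule borel_cantelli_AE1) (auto simp: sum less_top[symmetric] emeasure_finite)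
    then show ?thesis
    proof (rule eventually_mono)
      fix x assume x: "eventually (\<lambda>n. x \<in> space M - A n) sequentially"
      have "eventually (\<lambda>n. \<bar>S (Suc n) x / real (Suc n) - m0\<bar> < \<epsilon>) sequentially"
        using x by (rule eventually_mono) (auto simp: A_def)
      then show "eventually (\<lambda>k. \<bar>S k x / real k - m0\<bar> < \<epsilon>) sequentially"
        by (rule eventually_sequentially_Suc[THEN iffD1])
    qed
  qed
  have "AE \<omega> in M. \<forall>m. eventually (\<lambda>k. \<bar>S k \<omega> / real k - m0\<bar> < 1 / Suc m) sequentially"
    using main by (subst AE_all_countable) auto
  then show ?thesis
  proof (rule eventually_mono)
    fix \<omega> assume h: "\<forall>m. eventually (\<lambda>k. \<bar>S k \<omega> / real k - m0\<bar> < 1 / Suc m) sequentially"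
    have "(\<lambda>k. S k \<omega> / real k) \<longlonglongrightarrow> m0"
    proof (rule LIMSEQ_I)
      fix r :: real assume "0 < r"
      then obtain m where m: "inverse (real (Suc m)) < r" using reals_Archimedean by blast
      from h[rule_format, of m] obtain K where K: "\<forall>k\<ge>K. \<bar>S k \<omega> / real k - m0\<bar> < 1 / Suc m"
        by (auto simp: eventually_sequentially)
      show "\<exists>K. \<forall>k\<ge>K. norm (S k \<omega> / real k - m0) < r"
      proof (intro exI allI impI)
        fix k assume "K \<le> k"
        then have "\<bar>S k \<omega> / real k - m0\<bar> < 1 / Suc m" using K by blast
        moreover have "1 / real (Suc m) < r" using m by (simp add: inverse_eq_divide)
        ultimately show "norm (S k \<omega> / real k - m0) < r" by simp
      qed
    qed
    then show "(\<lambda>k. real (card ({j. Z (e j) \<omega> \<in> B} \<inter> {..<k})) / real k)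
            \<longlonglongrightarrow> prob {\<omega>\<in>space M. Z (e 0) \<omega> \<in> B}"
      by (simp add: S_eq m0_def EY)
  qed
qed

abbreviation U01 :: "real measure" where "U01 \<equiv> uniform_measure lborel {0..1}"

lemma U01_prob: "prob_space U01"
  by (rule prob_space_uniform_measure) auto

lemma sets_U01[simp, measurable_cong]: "sets U01 = sets borel" by simp

lemma space_U01[simp]: "space U01 = UNIV" by simp

lemma emeasure_U01: "X \<in> sets borel \<Longrightarrow> emeasure U01 X = emeasure lborel ({0..1} \<inter> X)"
  by (simp add: divide_ennreal_def)

lemma measure_U01: "X \<in> sets borel \<Longrightarrow> measure U01 X = measure lborel ({0..1} \<inter> X)"
  by (simp add: measure_def divide_ennreal_def)

lemma AE_U01_01: "AE x in U01. 0 < x \<and> x < 1"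
proof (rule AE_uniform_measureI)
  have "AE x in lborel. x \<notin> {0::real, 1}"
    by (rule AE_not_in) (rule finite_imp_null_set_lborel, simp)
  then show "AE x in lborel. (x::real) \<in> {0..1} \<longrightarrow> 0 < x \<and> x < 1"
  proof (rule eventually_mono)
    fix x :: real assume "x \<notin> {0, 1}"
    then show "x \<in> {0..1} \<longrightarrow> 0 < x \<and> x < 1" by (auto simp: less_le)
  qed
qed simp

lemma AE_U01_ne: "AE y in U01. x \<noteq> y"
proof (rule AE_uniform_measureI)
  show "AE y in lborel. y \<in> {0..1} \<longrightarrow> x \<noteq> y"
    by (rule AE_I'[OF finite_imp_null_set_lborel[of "{x}"]]) auto
qed simp

locale L9 = prob_space M for M :: "'a measure" +
  fixes s :: "'a \<Rightarrow> nat \<Rightarrow> real" and Us Vs :: "nat \<Rightarrow> 'a \<Rightarrow> real" and V :: "'a \<Rightarrow> real"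
  assumes s_meas: "s \<in> M \<rightarrow>\<^sub>M PiM UNIV (\<lambda>_. borel)"
    and frp_all: "\<forall>\<omega>\<in>space M. finite_ranked_partition (s \<omega>)"
    and dU: "\<And>k. distr M borel (Us k) = uniform_measure lborel {0..1}"
    and dVs: "\<And>k. distr M borel (Vs k) = uniform_measure lborel {0..1}"
    and dV: "distr M borel V = uniform_measure lborel {0..1}"
    and ind: "indep_vars (\<lambda>_. borel) (rvfam Us Vs V) UNIV"
    and ind2: "indep_set
           {s -` A \<inter> space M | A. A \<in> sets (PiM UNIV (\<lambda>_::nat. borel :: real measure))}
           {(\<lambda>\<omega> i. rvfam Us Vs V i \<omega>) -` A \<inter> space M | A.
              A \<in> sets (PiM UNIV (\<lambda>_::ridx. borel :: real measure))}"
begin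

lemma rvfam_simps[simp]: "rvfam Us Vs V (UI k) = Us k" "rvfam Us Vs V (VI k) = Vs k"
  "rvfam Us Vs V VV = V"
  by (simp_all add: rvfam_def)

lemma rv_fam[measurable]: "rvfam Us Vs V i \<in> borel_measurable M"
  using ind unfolding indep_vars_def by auto

lemma rv_Us[measurable]: "Us k \<in> borel_measurable M"
  using rv_fam[of "UI k"] by simp
lemma rv_Vs[measurable]: "Vs k \<in> borel_measurable M"
  using rv_fam[of "VI k"] by simp
lemma rv_V[measurable]: "V \<in> borel_measurable M"
  using rv_fam[of VV] by simp

lemma AE_unif:
  assumes X[measurable]: "X \<in> borel_measurable M" and d: "distr M borel X = U01"
  shows "AE \<omega> in M. 0 < X \<omega> \<and> X \<omega> < 1"
proof -
  have "AE x in distr M borel X. 0 < x \<and> x < 1" using AE_U01_01 by (simp only: d)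
  then show ?thesis by (subst (asm) AE_distr_iff) auto
qed

lemma pair_indep:
  assumes "i \<noteq> j"
  shows "indep_var borel (rvfam Us Vs V i) borel (rvfam Us Vs V j)"
proof -
  have "indep_var (PiM {i} (\<lambda>_. borel)) (\<lambda>\<omega>. restrict (\<lambda>k. rvfam Us Vs V k \<omega>) {i})
                  (PiM {j} (\<lambda>_. borel)) (\<lambda>\<omega>. restrict (\<lambda>k. rvfam Us Vs V k \<omega>) {j})"
    by (rule indep_var_restrict[OF ind]) (use assms in auto)
  then have "indep_var borel ((\<lambda>f. f i) \<circ> (\<lambda>\<omega>. restrict (\<lambda>k. rvfam Us Vs V k \<omega>) {i}))
                  borel ((\<lambda>f. f j) \<circ> (\<lambda>\<omega>. restrict (\<lambda>k. rvfam Us Vs V k \<omega>) {j}))"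
    by (rule indep_var_compose) (auto intro: measurable_component_singleton)
  then show ?thesis by (simp add: comp_def)
qed

lemma AE_distinct:
  assumes "i \<noteq> j" shows "AE \<omega> in M. Us i \<omega> \<noteq> Us j \<omega>"
proof -
  have ij: "UI i \<noteq> UI j" using assms by simp
  have "distr M borel (Us i) \<Otimes>\<^sub>M distr M borel (Us j) = distr M (borel \<Otimes>\<^sub>M borel) (\<lambda>x. (Us i x, Us j x))"
    using pair_indep[OF ij] unfolding indep_var_distribution_eq by simp
  then have D: "distr M (borel \<Otimes>\<^sub>M borel) (\<lambda>x. (Us i x, Us j x)) = U01 \<Otimes>\<^sub>M U01"
    by (simp add: dU)
  interpret P: pair_sigma_finite U01 U01
    using U01_prob by (simp add: pair_sigma_finite_def prob_space_imp_sigma_finite)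
  have "AE p in U01 \<Otimes>\<^sub>M U01. fst p \<noteq> snd p"
  proof (rule P.AE_pair_measure)
    show "{p \<in> space (U01 \<Otimes>\<^sub>M U01). fst p \<noteq> snd p} \<in> sets (U01 \<Otimes>\<^sub>M U01)"
      by measurable
    show "AE x in U01. AE y in U01. fst (x, y) \<noteq> snd (x, y)"
      by (rule AE_I2) (simp add: AE_U01_ne)
  qed
  then have "AE p in distr M (borel \<Otimes>\<^sub>M borel) (\<lambda>x. (Us i x, Us j x)). fst p \<noteq> snd p"
    unfolding D .
  then show ?thesis by (subst (asm) AE_distr_iff) auto
qed

lemma prob_Vs_ival: "prob {\<omega>\<in>space M. Vs 0 \<omega> \<in> {p..q}} = ival p q"
proof -
  have "prob {\<omega>\<in>space M. Vs 0 \<omega> \<in> {p..q}} = measure (distr M borel (Vs 0)) {p..q}"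
    by (subst measure_distr) (auto simp: vimage_def Int_def conj_commute)
  also have "\<dots> = measure lborel ({0..1} \<inter> {p..q})" by (simp add: dVs measure_U01)
  finally show ?thesis by (simp add: ival_def Int_commute)
qed

lemma AE_slln: "AE \<omega> in M. slln_ok (\<lambda>k. Vs k \<omega>)"
proof -
  have h: "AE \<omega> in M. (\<lambda>k. real (card ({j. rvfam Us Vs V (VI j) \<omega> \<in> {p..q}} \<inter> {..<k})) / real k)
            \<longlonglongrightarrow> prob {\<omega>\<in>space M. rvfam Us Vs V (VI 0) \<omega> \<in> {p..q}}" for p q
  proof (rule slln_indicator)
    show "inj VI" by (auto simp: inj_def)
    show "indep_vars (\<lambda>_. borel) (rvfam Us Vs V) (range VI)"
      by (rule indep_vars_subset[OF ind]) auto
    show "distr M borel (rvfam Us Vs V (VI j)) = distr M borel (rvfam Us Vs V (VI 0))" for j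
      by (simp add: dVs)
  qed simp
  have "AE \<omega> in M. cnt (\<lambda>k. Vs k \<omega>) {p..q} \<longlonglongrightarrow> ival p q" for p q
    using prob_Vs_ival[of p q] h[of p q] by (simp add: cnt_def[abs_def])
  then have "AE \<omega> in M. \<forall>p\<in>\<rat>. \<forall>q\<in>\<rat>. cnt (\<lambda>k. Vs k \<omega>) {p..q} \<longlonglongrightarrow> ival p q"
    by (auto simp: AE_ball_countable countable_rat)
  then show ?thesis by (simp add: slln_ok_def)
qed

end

definition psum :: "(nat \<Rightarrow> real) \<Rightarrow> real" where
  "psum g = lim (\<lambda>n. \<Sum>i<n. g i)"

lemma psum_eq:
  assumes F: "finite F" and z: "\<And>i. i \<notin> F \<Longrightarrow> g i = 0"
  shows "psum g = (\<Sum>i\<in>F. g i)"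
proof -
  obtain n0 where n0: "\<And>i. i \<in> F \<Longrightarrow> i < n0"
    using F finite_nat_bounded by blast
  have "eventually (\<lambda>n. (\<Sum>i<n. g i) = (\<Sum>i\<in>F. g i)) sequentially"
  proof (rule eventually_sequentiallyI[of n0])
    fix n assume "n0 \<le> n"
    then have "F \<subseteq> {..<n}" using n0 by force
    then show "(\<Sum>i<n. g i) = (\<Sum>i\<in>F. g i)"
      by (intro sum.mono_neutral_right) (auto simp: z)
  qed
  then have "(\<lambda>n. \<Sum>i<n. g i) \<longlonglongrightarrow> (\<Sum>i\<in>F. g i)" by (rule tendsto_eventually)
  then show ?thesis unfolding psum_def by (rule limI)
qed

definition s0m :: "(nat \<Rightarrow> real) \<Rightarrow> real" where "s0m \<sigma> = 1 - psum \<sigma>"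

definition aam :: "(nat \<Rightarrow> real) \<Rightarrow> (nat \<Rightarrow> real) \<Rightarrow> nat \<Rightarrow> real" where
  "aam \<sigma> u i = s0m \<sigma> * u i + psum (\<lambda>j. \<sigma> j * (if u j < u i then 1 else 0))"

definition inHop :: "(nat \<Rightarrow> real) \<Rightarrow> (nat \<Rightarrow> real) \<Rightarrow> real \<Rightarrow> bool" where
  "inHop \<sigma> u y \<longleftrightarrow> (\<exists>i. \<sigma> i \<noteq> 0 \<and> aam \<sigma> u i < y \<and> y < aam \<sigma> u i + \<sigma> i)"

definition inEend :: "(nat \<Rightarrow> real) \<Rightarrow> (nat \<Rightarrow> real) \<Rightarrow> real \<Rightarrow> bool" where
  "inEend \<sigma> u y \<longleftrightarrow> (\<exists>i. \<sigma> i \<noteq> 0 \<and> (y = aam \<sigma> u i \<or> y = aam \<sigma> u i + \<sigma> i))"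

definition Ut :: "(nat \<Rightarrow> real) \<Rightarrow> (nat \<Rightarrow> real) \<Rightarrow> real \<Rightarrow> real \<Rightarrow> real" where
  "Ut \<sigma> u v w = (if inHop \<sigma> u v then s0m \<sigma> + (1 - s0m \<sigma>) * w else s0m \<sigma> * w)"

lemma frp_s0m: "finite_ranked_partition \<sigma> \<Longrightarrow> s0m \<sigma> = s0 \<sigma>"
  unfolding s0m_def s0_def
  by (subst psum_eq[of "{i. \<sigma> i \<noteq> 0}"]) (auto simp: finite_ranked_partition_def)

lemma frp_aam: "finite_ranked_partition \<sigma> \<Longrightarrow> aam \<sigma> u i = aa \<sigma> u i"
  unfolding aam_def aa_def frp_s0m
  by (subst psum_eq[of "{i. \<sigma> i \<noteq> 0}"]) (auto simp: finite_ranked_partition_def frp_s0m)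

lemma frp_inHop: "finite_ranked_partition \<sigma> \<Longrightarrow> inHop \<sigma> u y \<longleftrightarrow> y \<in> Hop \<sigma> u"
  by (simp add: inHop_def Hop_def frp_aam)

lemma frp_inEend: "finite_ranked_partition \<sigma> \<Longrightarrow> inEend \<sigma> u y \<longleftrightarrow> y \<in> Eend \<sigma> u"
  by (simp add: inEend_def Eend_def frp_aam)

abbreviation SN :: "(nat \<Rightarrow> real) measure" where "SN \<equiv> PiM UNIV (\<lambda>_. borel)"

lemma meas_psum[measurable]: "psum \<in> borel_measurable SN"
  unfolding psum_def by measurable

lemma meas_s0m[measurable]: "s0m \<in> borel_measurable SN"
  unfolding s0m_def by measurable

lemma meas_aam[measurable]: "(\<lambda>(\<sigma>, u). aam \<sigma> u i) \<in> borel_measurable (SN \<Otimes>\<^sub>M SN)"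
  unfolding aam_def psum_def s0m_def by measurable

abbreviation P4 :: "((nat \<Rightarrow> real) \<times> (nat \<Rightarrow> real) \<times> real \<times> real) measure" where
  "P4 \<equiv> SN \<Otimes>\<^sub>M (SN \<Otimes>\<^sub>M (borel \<Otimes>\<^sub>M borel))"

lemma m_sig[measurable]: "(\<lambda>x. fst x i) \<in> borel_measurable P4"
  by measurable
lemma m_s0[measurable]: "(\<lambda>x. s0m (fst x)) \<in> borel_measurable P4"
  by measurable
lemma m_v[measurable]: "(\<lambda>x. fst (snd (snd x))) \<in> borel_measurable P4"
  by measurable
lemma m_w[measurable]: "(\<lambda>x. snd (snd (snd x))) \<in> borel_measurable P4"
  by measurable
lemma m_aa[measurable]: "(\<lambda>x. aam (fst x) (fst (snd x)) i) \<in> borel_measurable P4"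
proof -
  have "(\<lambda>x. (fst x, fst (snd x))) \<in> P4 \<rightarrow>\<^sub>M SN \<Otimes>\<^sub>M SN" by measurable
  from measurable_compose[OF this meas_aam[of i]] show ?thesis by (simp add: comp_def)
qed

lemma m_inHop[measurable]: "Measurable.pred P4 (\<lambda>x. inHop (fst x) (fst (snd x)) (fst (snd (snd x))))"
  unfolding inHop_def by measurable

lemma m_inEend[measurable]: "Measurable.pred P4 (\<lambda>x. inEend (fst x) (fst (snd x)) (fst (snd (snd x))))"
  unfolding inEend_def by measurable

lemma meas_Ut4[measurable]: "(\<lambda>x. Ut (fst x) (fst (snd x)) (fst (snd (snd x))) (snd (snd (snd x)))) \<in> borel_measurable P4"
  unfolding Ut_def by measurable

lemma sets_At: "{x\<in>space P4. Ut (fst x) (fst (snd x)) (fst (snd (snd x))) (snd (snd (snd x))) \<le> t} \<in> sets P4"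
  by measurable

lemma sets_Abad: "{x\<in>space P4. inEend (fst x) (fst (snd x)) (fst (snd (snd x))) \<or>
   (s0m (fst x) = 0 \<and> \<not> inHop (fst x) (fst (snd x)) (fst (snd (snd x))))} \<in> sets P4"
  by measurable

abbreviation TR :: "(ridx \<Rightarrow> real) measure" where "TR \<equiv> PiM UNIV (\<lambda>_. borel)"

lemma (in prob_space) indep_prod_distr:
  assumes X[measurable]: "X \<in> M \<rightarrow>\<^sub>M S" and Y[measurable]: "Y \<in> M \<rightarrow>\<^sub>M T"
    and indep: "\<And>A B. A \<in> sets S \<Longrightarrow> B \<in> sets T \<Longrightarrow>
       prob ((X -` A \<inter> space M) \<inter> (Y -` B \<inter> space M)) = prob (X -` A \<inter> space M) * prob (Y -` B \<inter> space M)"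
  shows "distr M (S \<Otimes>\<^sub>M T) (\<lambda>x. (X x, Y x)) = distr M S X \<Otimes>\<^sub>M distr M T Y"
proof -
  have XY: "random_variable (S \<Otimes>\<^sub>M T) (\<lambda>x. (X x, Y x))" by measurable
  interpret X: prob_space "distr M S X" by (rule prob_space_distr) fact
  interpret Y: prob_space "distr M T Y" by (rule prob_space_distr) fact
  interpret XY: pair_prob_space "distr M S X" "distr M T Y" ..
  show ?thesis
  proof (rule pair_measure_eqI[symmetric])
    show "sigma_finite_measure (distr M S X)" ..
    show "sigma_finite_measure (distr M T Y)" ..
    fix A B assume A: "A \<in> sets (distr M S X)" and B: "B \<in> sets (distr M T Y)"
    have "emeasure (distr M (S \<Otimes>\<^sub>M T) (\<lambda>x. (X x, Y x))) (A \<times> B) =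
          emeasure M ((\<lambda>x. (X x, Y x)) -` (A \<times> B) \<inter> space M)"
      using A B by (intro emeasure_distr[OF XY]) auto
    also have "(\<lambda>x. (X x, Y x)) -` (A \<times> B) \<inter> space M = (X -` A \<inter> space M) \<inter> (Y -` B \<inter> space M)"
      by auto
    also have "emeasure M \<dots> = emeasure M (X -` A \<inter> space M) * emeasure M (Y -` B \<inter> space M)"
      using indep[of A B] A B
      by (simp add: emeasure_eq_measure measure_nonneg ennreal_mult)
    also have "\<dots> = emeasure (distr M S X) A * emeasure (distr M T Y) B"
      using A B by (simp add: emeasure_distr)
    finally show "emeasure (distr M S X) A * emeasure (distr M T Y) B =
       emeasure (distr M (S \<Otimes>\<^sub>M T) (\<lambda>x. (X x, Y x))) (A \<times> B)" by simp
  qed simp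
qed

context L9 begin

lemma R_meas[measurable]: "(\<lambda>\<omega> i. rvfam Us Vs V i \<omega>) \<in> M \<rightarrow>\<^sub>M TR"
  by (rule measurable_PiM_single') (auto simp: rv_fam)

lemma Uv_meas[measurable]: "(\<lambda>\<omega> k. Us k \<omega>) \<in> M \<rightarrow>\<^sub>M SN"
  by (rule measurable_PiM_single') auto

lemma s_meas'[measurable]: "s \<in> M \<rightarrow>\<^sub>M SN" using s_meas .

lemma distr_sR: "distr M (SN \<Otimes>\<^sub>M TR) (\<lambda>\<omega>. (s \<omega>, (\<lambda>i. rvfam Us Vs V i \<omega>))) =
   distr M SN s \<Otimes>\<^sub>M distr M TR (\<lambda>\<omega> i. rvfam Us Vs V i \<omega>)"
proof (rule indep_prod_distr)
  fix A B assume "A \<in> sets SN" "B \<in> sets TR"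
  then show "prob ((s -` A \<inter> space M) \<inter> ((\<lambda>\<omega> i. rvfam Us Vs V i \<omega>) -` B \<inter> space M)) =
      prob (s -` A \<inter> space M) * prob ((\<lambda>\<omega> i. rvfam Us Vs V i \<omega>) -` B \<inter> space M)"
    by (intro indep_setD[OF ind2]) auto
qed measurable

lemma distr_UVW: "distr M (SN \<Otimes>\<^sub>M (borel \<Otimes>\<^sub>M borel)) (\<lambda>\<omega>. ((\<lambda>k. Us k \<omega>), (V \<omega>, Vs 0 \<omega>))) =
   distr M SN (\<lambda>\<omega> k. Us k \<omega>) \<Otimes>\<^sub>M distr M (borel \<Otimes>\<^sub>M borel) (\<lambda>\<omega>. (V \<omega>, Vs 0 \<omega>))"
proof (rule indep_prod_distr)
  define X where "X = (\<lambda>\<omega>. restrict (\<lambda>i. rvfam Us Vs V i \<omega>) (range UI))"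
  define Y where "Y = (\<lambda>\<omega>. restrict (\<lambda>i. rvfam Us Vs V i \<omega>) {VV, VI 0})"
  have iv: "indep_var (PiM (range UI) (\<lambda>_. borel)) X (PiM {VV, VI 0} (\<lambda>_. borel)) Y"
    unfolding X_def Y_def by (rule indep_var_restrict[OF ind]) auto
  have g1: "(\<lambda>f k. f (UI k)) \<in> PiM (range UI) (\<lambda>_. borel) \<rightarrow>\<^sub>M SN"
    by (rule measurable_PiM_single') (auto intro: measurable_component_singleton)
  have g2: "(\<lambda>f. (f VV, f (VI 0))) \<in> PiM {VV, VI 0} (\<lambda>_. borel) \<rightarrow>\<^sub>M (borel \<Otimes>\<^sub>M borel)"
    by (intro measurable_Pair measurable_component_singleton) auto
  have X: "X \<in> M \<rightarrow>\<^sub>M PiM (range UI) (\<lambda>_. borel)" using iv by (rule indep_var_rv1)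
  have Y: "Y \<in> M \<rightarrow>\<^sub>M PiM {VV, VI 0} (\<lambda>_. borel)" using iv by (rule indep_var_rv2)
  fix A :: "(nat \<Rightarrow> real) set" and B :: "(real \<times> real) set"
  assume A: "A \<in> sets SN" and B: "B \<in> sets (borel \<Otimes>\<^sub>M borel)"
  define A' where "A' = (\<lambda>f k. f (UI k)) -` A \<inter> space (PiM (range UI) (\<lambda>_. borel :: real measure))"
  define B' where "B' = (\<lambda>f. (f VV, f (VI 0))) -` B \<inter> space (PiM {VV, VI 0} (\<lambda>_. borel :: real measure))"
  have A': "A' \<in> sets (PiM (range UI) (\<lambda>_. borel))" unfolding A'_def using g1 A by (rule measurable_sets)
  have B': "B' \<in> sets (PiM {VV, VI 0} (\<lambda>_. borel))" unfolding B'_def using g2 B by (rule measurable_sets)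
  have eA: "(\<lambda>\<omega> k. Us k \<omega>) -` A \<inter> space M = X -` A' \<inter> space M"
    using measurable_space[OF X] by (auto simp: A'_def X_def)
  have eB: "(\<lambda>\<omega>. (V \<omega>, Vs 0 \<omega>)) -` B \<inter> space M = Y -` B' \<inter> space M"
    using measurable_space[OF Y] by (auto simp: B'_def Y_def)
  have "prob ((\<lambda>x. (X x, Y x)) -` (A' \<times> B') \<inter> space M) = prob (X -` A' \<inter> space M) * prob (Y -` B' \<inter> space M)"
    by (rule indep_varD[OF iv A' B'])
  moreover have "(\<lambda>x. (X x, Y x)) -` (A' \<times> B') \<inter> space M = (X -` A' \<inter> space M) \<inter> (Y -` B' \<inter> space M)"
    by auto
  ultimately show "prob (((\<lambda>\<omega> k. Us k \<omega>) -` A \<inter> space M) \<inter> ((\<lambda>\<omega>. (V \<omega>, Vs 0 \<omega>)) -` B \<inter> space M)) =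
      prob ((\<lambda>\<omega> k. Us k \<omega>) -` A \<inter> space M) * prob ((\<lambda>\<omega>. (V \<omega>, Vs 0 \<omega>)) -` B \<inter> space M)"
    by (simp add: eA eB)
qed measurable

lemma distr_VW: "distr M (borel \<Otimes>\<^sub>M borel) (\<lambda>\<omega>. (V \<omega>, Vs 0 \<omega>)) = U01 \<Otimes>\<^sub>M U01"
proof -
  have "VV \<noteq> VI 0" by simp
  from pair_indep[OF this] have "distr M borel V \<Otimes>\<^sub>M distr M borel (Vs 0) =
      distr M (borel \<Otimes>\<^sub>M borel) (\<lambda>x. (V x, Vs 0 x))"
    unfolding indep_var_distribution_eq by simp
  then show ?thesis by (simp add: dV dVs)
qed

end

lemma U01_pair_prob: "prob_space (U01 \<Otimes>\<^sub>M U01)"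
proof -
  interpret A: prob_space U01 by (rule U01_prob)
  interpret P: pair_prob_space U01 U01 ..
  show ?thesis by (rule P.prob_space_axioms)
qed

lemma gU_meas[measurable]: "(\<lambda>r k. r (UI k)) \<in> TR \<rightarrow>\<^sub>M SN"
  by (rule measurable_PiM_single') (auto intro: measurable_component_singleton)

context L9 begin

lemma fub_inner:
  fixes A :: "((nat \<Rightarrow> real) \<times> (nat \<Rightarrow> real) \<times> real \<times> real) set"
  assumes A: "A \<in> sets P4"
  shows "emeasure M {\<omega>\<in>space M. (\<sigma>, (\<lambda>k. Us k \<omega>), V \<omega>, Vs 0 \<omega>) \<in> A} =
     (\<integral>\<^sup>+\<omega>. emeasure (U01 \<Otimes>\<^sub>M U01) {p. (\<sigma>, (\<lambda>k. Us k \<omega>), p) \<in> A} \<partial>M)"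
proof -
  interpret Q: prob_space "U01 \<Otimes>\<^sub>M U01" by (rule U01_pair_prob)
  define B where "B = Pair \<sigma> -` A"
  have B: "B \<in> sets (SN \<Otimes>\<^sub>M (borel \<Otimes>\<^sub>M borel))" unfolding B_def using A by (rule sets_Pair1)
  have B': "B \<in> sets (distr M SN (\<lambda>\<omega> k. Us k \<omega>) \<Otimes>\<^sub>M (U01 \<Otimes>\<^sub>M U01))" using B by simp
  have "{\<omega>\<in>space M. (\<sigma>, (\<lambda>k. Us k \<omega>), V \<omega>, Vs 0 \<omega>) \<in> A} =
        (\<lambda>\<omega>. ((\<lambda>k. Us k \<omega>), (V \<omega>, Vs 0 \<omega>))) -` B \<inter> space M"
    by (auto simp: B_def)
  then have "emeasure M {\<omega>\<in>space M. (\<sigma>, (\<lambda>k. Us k \<omega>), V \<omega>, Vs 0 \<omega>) \<in> A} =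
     emeasure (distr M (SN \<Otimes>\<^sub>M (borel \<Otimes>\<^sub>M borel)) (\<lambda>\<omega>. ((\<lambda>k. Us k \<omega>), (V \<omega>, Vs 0 \<omega>)))) B"
    using B by (simp add: emeasure_distr)
  also have "\<dots> = emeasure (distr M SN (\<lambda>\<omega> k. Us k \<omega>) \<Otimes>\<^sub>M (U01 \<Otimes>\<^sub>M U01)) B"
    by (simp add: distr_UVW distr_VW)
  also have "\<dots> = (\<integral>\<^sup>+u. emeasure (U01 \<Otimes>\<^sub>M U01) (Pair u -` B) \<partial>distr M SN (\<lambda>\<omega> k. Us k \<omega>))"
    by (rule Q.emeasure_pair_measure_alt[OF B'])
  also have "\<dots> = (\<integral>\<^sup>+\<omega>. emeasure (U01 \<Otimes>\<^sub>M U01) (Pair (\<lambda>k. Us k \<omega>) -` B) \<partial>M)"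
  proof (rule nn_integral_distr)
    show "(\<lambda>u. emeasure (U01 \<Otimes>\<^sub>M U01) (Pair u -` B)) \<in> borel_measurable (distr M SN (\<lambda>\<omega> k. Us k \<omega>))"
      using Q.measurable_emeasure_Pair[OF B'] by simp
  qed simp
  also have "\<dots> = (\<integral>\<^sup>+\<omega>. emeasure (U01 \<Otimes>\<^sub>M U01) {p. (\<sigma>, (\<lambda>k. Us k \<omega>), p) \<in> A} \<partial>M)"
    by (simp add: B_def vimage_def)
  finally show ?thesis .
qed

lemma fub:
  fixes A :: "((nat \<Rightarrow> real) \<times> (nat \<Rightarrow> real) \<times> real \<times> real) set"
  assumes A: "A \<in> sets P4"
  shows "emeasure M {\<omega>\<in>space M. (s \<omega>, (\<lambda>k. Us k \<omega>), V \<omega>, Vs 0 \<omega>) \<in> A} =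
     (\<integral>\<^sup>+\<omega>. (\<integral>\<^sup>+\<omega>'. emeasure (U01 \<Otimes>\<^sub>M U01) {p. (s \<omega>, (\<lambda>k. Us k \<omega>'), p) \<in> A} \<partial>M) \<partial>M)"
proof -
  define Q where "Q = distr M TR (\<lambda>\<omega> i. rvfam Us Vs V i \<omega>)"
  interpret Q: prob_space Q unfolding Q_def by (rule prob_space_distr) simp
  define G where "G = (\<lambda>x::(nat \<Rightarrow> real) \<times> (ridx \<Rightarrow> real). (fst x, (\<lambda>k. snd x (UI k)), (snd x VV, snd x (VI 0))))"
  have Gm: "G \<in> SN \<Otimes>\<^sub>M TR \<rightarrow>\<^sub>M P4"
  proof -
    have "(\<lambda>x::(nat \<Rightarrow> real) \<times> (ridx \<Rightarrow> real). (\<lambda>k. snd x (UI k))) \<in> SN \<Otimes>\<^sub>M TR \<rightarrow>\<^sub>M SN"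
      using measurable_compose[OF measurable_snd gU_meas] by (simp add: comp_def)
    moreover have "(\<lambda>x::(nat \<Rightarrow> real) \<times> (ridx \<Rightarrow> real). snd x i) \<in> SN \<Otimes>\<^sub>M TR \<rightarrow>\<^sub>M borel" for i
      using measurable_compose[OF measurable_snd measurable_component_singleton[of i UNIV "\<lambda>_. borel"]]
      by (simp add: comp_def)
    ultimately show ?thesis unfolding G_def by (intro measurable_Pair) auto
  qed
  define A' where "A' = G -` A \<inter> space (SN \<Otimes>\<^sub>M TR)"
  have A': "A' \<in> sets (SN \<Otimes>\<^sub>M TR)" unfolding A'_def using Gm A by (rule measurable_sets)
  have A'': "A' \<in> sets (distr M SN s \<Otimes>\<^sub>M Q)" using A' by (simp add: Q_def)
  have "{\<omega>\<in>space M. (s \<omega>, (\<lambda>k. Us k \<omega>), V \<omega>, Vs 0 \<omega>) \<in> A} =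
        (\<lambda>\<omega>. (s \<omega>, (\<lambda>i. rvfam Us Vs V i \<omega>))) -` A' \<inter> space M"
    using measurable_space[OF s_meas'] measurable_space[OF R_meas] by (auto simp: A'_def G_def space_pair_measure)
  then have "emeasure M {\<omega>\<in>space M. (s \<omega>, (\<lambda>k. Us k \<omega>), V \<omega>, Vs 0 \<omega>) \<in> A} =
     emeasure (distr M (SN \<Otimes>\<^sub>M TR) (\<lambda>\<omega>. (s \<omega>, (\<lambda>i. rvfam Us Vs V i \<omega>)))) A'"
    using A' by (simp add: emeasure_distr)
  also have "\<dots> = emeasure (distr M SN s \<Otimes>\<^sub>M Q) A'"
    by (simp add: distr_sR Q_def)
  also have "\<dots> = (\<integral>\<^sup>+\<sigma>. emeasure Q (Pair \<sigma> -` A') \<partial>distr M SN s)"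
    by (rule Q.emeasure_pair_measure_alt[OF A''])
  also have "\<dots> = (\<integral>\<^sup>+\<omega>. emeasure Q (Pair (s \<omega>) -` A') \<partial>M)"
  proof (rule nn_integral_distr)
    show "(\<lambda>\<sigma>. emeasure Q (Pair \<sigma> -` A')) \<in> borel_measurable (distr M SN s)"
      using Q.measurable_emeasure_Pair[OF A''] by simp
  qed simp
  also have "\<dots> = (\<integral>\<^sup>+\<omega>. (\<integral>\<^sup>+\<omega>'. emeasure (U01 \<Otimes>\<^sub>M U01) {p. (s \<omega>, (\<lambda>k. Us k \<omega>'), p) \<in> A} \<partial>M) \<partial>M)"
  proof (rule nn_integral_cong)
    fix \<omega> assume "\<omega> \<in> space M"
    have PA: "Pair (s \<omega>) -` A' \<in> sets TR" using A' by (rule sets_Pair1)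
    have "emeasure Q (Pair (s \<omega>) -` A') = emeasure M ((\<lambda>\<omega>' i. rvfam Us Vs V i \<omega>') -` (Pair (s \<omega>) -` A') \<inter> space M)"
      unfolding Q_def using PA by (simp add: emeasure_distr)
    also have "(\<lambda>\<omega>' i. rvfam Us Vs V i \<omega>') -` (Pair (s \<omega>) -` A') \<inter> space M =
       {\<omega>'\<in>space M. (s \<omega>, (\<lambda>k. Us k \<omega>'), V \<omega>', Vs 0 \<omega>') \<in> A}"
      using measurable_space[OF s_meas' \<open>\<omega> \<in> space M\<close>] measurable_space[OF R_meas]
      by (auto simp: A'_def G_def space_pair_measure)
    also have "emeasure M \<dots> = (\<integral>\<^sup>+\<omega>'. emeasure (U01 \<Otimes>\<^sub>M U01) {p. (s \<omega>, (\<lambda>k. Us k \<omega>'), p) \<in> A} \<partial>M)"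
      by (rule fub_inner[OF A])
    finally show "emeasure Q (Pair (s \<omega>) -` A') = (\<integral>\<^sup>+\<omega>'. emeasure (U01 \<Otimes>\<^sub>M U01) {p. (s \<omega>, (\<lambda>k. Us k \<omega>'), p) \<in> A} \<partial>M)" .
  qed
  finally show ?thesis .
qed

lemma fub_const:
  fixes A :: "((nat \<Rightarrow> real) \<times> (nat \<Rightarrow> real) \<times> real \<times> real) set"
  assumes A: "A \<in> sets P4"
    and G: "AE \<omega>' in M. G \<omega>'"
    and c: "\<And>\<omega> \<omega>'. \<omega> \<in> space M \<Longrightarrow> \<omega>' \<in> space M \<Longrightarrow> G \<omega>' \<Longrightarrow>
        emeasure (U01 \<Otimes>\<^sub>M U01) {p. (s \<omega>, (\<lambda>k. Us k \<omega>'), p) \<in> A} = c"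
  shows "emeasure M {\<omega>\<in>space M. (s \<omega>, (\<lambda>k. Us k \<omega>), V \<omega>, Vs 0 \<omega>) \<in> A} = c"
proof -
  have "(\<integral>\<^sup>+\<omega>. (\<integral>\<^sup>+\<omega>'. emeasure (U01 \<Otimes>\<^sub>M U01) {p. (s \<omega>, (\<lambda>k. Us k \<omega>'), p) \<in> A} \<partial>M) \<partial>M) =
        (\<integral>\<^sup>+\<omega>. c \<partial>M)"
  proof (rule nn_integral_cong)
    fix \<omega> assume \<omega>: "\<omega> \<in> space M"
    have "(\<integral>\<^sup>+\<omega>'. emeasure (U01 \<Otimes>\<^sub>M U01) {p. (s \<omega>, (\<lambda>k. Us k \<omega>'), p) \<in> A} \<partial>M) = (\<integral>\<^sup>+\<omega>'. c \<partial>M)"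
    proof (rule nn_integral_cong_AE)
      show "AE \<omega>' in M. emeasure (U01 \<Otimes>\<^sub>M U01) {p. (s \<omega>, (\<lambda>k. Us k \<omega>'), p) \<in> A} = c"
        using G AE_space by eventually_elim (rule c[OF \<omega>], auto)
    qed
    then show "(\<integral>\<^sup>+\<omega>'. emeasure (U01 \<Otimes>\<^sub>M U01) {p. (s \<omega>, (\<lambda>k. Us k \<omega>'), p) \<in> A} \<partial>M) = c"
      by (simp add: emeasure_space_1)
  qed
  then show ?thesis using fub[OF A] by (simp add: emeasure_space_1)
qed

end

definition cl :: "real \<Rightarrow> real" where "cl x = max 0 (min x 1)"

lemma cl_scale: "0 < a \<Longrightarrow> a * cl (x / a) = max 0 (min x a)"
  unfolding cl_def
  by (cases "x \<le> 0"; cases "x \<le> a") (auto simp: field_simps max_def min_def)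

lemma cl_id2: "0 \<le> s \<Longrightarrow> s \<le> 1 \<Longrightarrow> max 0 (min (t - s) (1 - s)) + max 0 (min t s) = cl (t::real)"
  unfolding cl_def max_def min_def by (split if_split)+ linarith

lemma clip_id:
  assumes "0 \<le> s" "s \<le> 1"
  shows "(if s < 1 then (1 - s) * cl ((t - s) / (1 - s)) else 0) + (if 0 < s then s * cl (t / s) else 0) = cl t"
proof -
  have A: "(if s < 1 then (1 - s) * cl ((t - s) / (1 - s)) else 0) = max 0 (min (t - s) (1 - s))"
  proof (cases "s < 1")
    case True then show ?thesis using cl_scale[of "1 - s" "t - s"] by simp
  next
    case False then have "s = 1" using assms by simp
    then show ?thesis by (simp add: max_def min_def)
  qed
  have B: "(if 0 < s then s * cl (t / s) else 0) = max 0 (min t s)"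
  proof (cases "0 < s")
    case True then show ?thesis using cl_scale[of s t] by simp
  next
    case False then have "s = 0" using assms by simp
    then show ?thesis by (simp add: max_def min_def)
  qed
  show ?thesis using assms by (simp only: A B) (rule cl_id2)
qed

lemma measure_U01_atMost: "measure U01 {..x} = cl x"
proof -
  have "measure U01 {..x} = measure lborel ({0..1} \<inter> {..x})" by (simp add: measure_U01)
  also have "\<dots> = cl x"
  proof (cases "x < 0")
    case True then have "{0..1} \<inter> {..x} = {}" by auto
    then show ?thesis using True by (simp add: cl_def)
  next
    case False
    show ?thesis
    proof (cases "x \<le> 1")
      case True then have "{0..1} \<inter> {..x} = {0..x}" by auto
      then show ?thesis using True False by (simp add: cl_def)
    next
      case False then have "{0..1} \<inter> {..x} = {0..1}" by auto
      then show ?thesis using False by (simp add: cl_def)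
    qed
  qed
  finally show ?thesis .
qed

lemma U01_emeasure_eq: "X \<in> sets borel \<Longrightarrow> emeasure U01 X = ennreal (measure U01 X)"
proof -
  interpret prob_space U01 by (rule U01_prob)
  assume "X \<in> sets borel" then show ?thesis by (simp add: emeasure_eq_measure)
qed

context det begin

lemma Hop_sets[measurable]: "Hop \<sigma> u \<in> sets borel"
  unfolding Hop_eq using finN by (intro sets.finite_UN) auto

lemma measure_U01_Hop: "measure U01 (Hop \<sigma> u) = 1 - s0 \<sigma>"
  using Hop_sub measure_Hop by (simp add: measure_U01 Int_absorb1)

lemma measure_U01_nHop: "measure U01 (- Hop \<sigma> u) = s0 \<sigma>"
proof -
  have "measure U01 (- Hop \<sigma> u) = measure lborel ({0..1} - Hop \<sigma> u)"
    by (simp add: measure_U01 Diff_eq Int_commute)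
  also have "\<dots> = measure lborel {0..1::real} - measure lborel (Hop \<sigma> u)"
    using measure_Diff[of lborel "{0..1::real}" "Hop \<sigma> u"] Hop_sub content_real[of "0::real" 1] by simp
  finally show ?thesis using measure_Hop by simp
qed

lemma s0_le1: "s0 \<sigma> \<le> 1"
  using sumN sig_nn by (metis diff_ge_0_iff_ge sum_nonneg)

lemma comp_U:
  "emeasure (U01 \<Otimes>\<^sub>M U01) {p. Ut \<sigma> u (fst p) (snd p) \<le> t} = ennreal (cl t)"
proof -
  interpret U: prob_space U01 by (rule U01_prob)
  interpret P: pair_prob_space U01 U01 ..
  define H where "H = Hop \<sigma> u"
  define s where "s = s0 \<sigma>"
  define B1 where "B1 = {w::real. s + (1 - s) * w \<le> t}"
  define B2 where "B2 = {w::real. s * w \<le> t}"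
  have H[measurable]: "H \<in> sets borel" unfolding H_def by (rule Hop_sets)
  have "Measurable.pred borel (\<lambda>w::real. s + (1 - s) * w \<le> t)" by measurable
  then have B1m[measurable]: "B1 \<in> sets borel" by (simp add: B1_def pred_def)
  have "Measurable.pred borel (\<lambda>w::real. s * w \<le> t)" by measurable
  then have B2m[measurable]: "B2 \<in> sets borel" by (simp add: B2_def pred_def)
  have fr: "finite_ranked_partition \<sigma>" by (rule frp)
  have Ueq: "Ut \<sigma> u v w = (if v \<in> H then s + (1 - s) * w else s * w)" for v w
    unfolding Ut_def frp_inHop[OF fr] frp_s0m[OF fr] H_def s_def ..
  have eqE: "{p. Ut \<sigma> u (fst p) (snd p) \<le> t} = (H \<times> B1) \<union> ((- H) \<times> B2)"
    unfolding Ueq B1_def B2_def by auto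
  have Hc: "- H \<in> sets borel" using H by (rule borel_comp)
  have "emeasure (U01 \<Otimes>\<^sub>M U01) ((H \<times> B1) \<union> ((- H) \<times> B2)) =
        emeasure (U01 \<Otimes>\<^sub>M U01) (H \<times> B1) + emeasure (U01 \<Otimes>\<^sub>M U01) ((- H) \<times> B2)"
    using Hc by (intro plus_emeasure[symmetric]) auto
  also have "emeasure (U01 \<Otimes>\<^sub>M U01) (H \<times> B1) = emeasure U01 H * emeasure U01 B1"
    by (rule U.emeasure_pair_measure_Times) auto
  also have "emeasure (U01 \<Otimes>\<^sub>M U01) ((- H) \<times> B2) = emeasure U01 (- H) * emeasure U01 B2"
    using Hc by (intro U.emeasure_pair_measure_Times) auto
  also have "emeasure U01 H = ennreal (1 - s)"
    unfolding U01_emeasure_eq[OF H] using measure_U01_Hop by (simp only: H_def s_def)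
  also have "emeasure U01 (- H) = ennreal s"
    unfolding U01_emeasure_eq[OF Hc] using measure_U01_nHop by (simp only: H_def s_def)
  also have "emeasure U01 B1 = ennreal (measure U01 B1)" by (rule U01_emeasure_eq[OF B1m])
  also have "emeasure U01 B2 = ennreal (measure U01 B2)" by (rule U01_emeasure_eq[OF B2m])
  also have "ennreal (1 - s) * ennreal (measure U01 B1) + ennreal s * ennreal (measure U01 B2) =
        ennreal ((1 - s) * measure U01 B1 + s * measure U01 B2)"
    using s0_nn s0_le1 by (simp add: ennreal_mult s_def)
  also have "(1 - s) * measure U01 B1 = (if s < 1 then (1 - s) * cl ((t - s) / (1 - s)) else 0)"
  proof (cases "s < 1")
    case True
    then have "B1 = {..(t - s) / (1 - s)}" by (auto simp: B1_def pos_le_divide_eq algebra_simps)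
    then show ?thesis using True by (simp add: measure_U01_atMost)
  next
    case False then have "s = 1" using s0_le1 by (simp add: s_def)
    then show ?thesis by simp
  qed
  also have "s * measure U01 B2 = (if 0 < s then s * cl (t / s) else 0)"
  proof (cases "0 < s")
    case True
    then have "B2 = {..t / s}" by (auto simp: B2_def pos_le_divide_eq algebra_simps)
    then show ?thesis using True by (simp add: measure_U01_atMost)
  next
    case False then have "s = 0" using s0_nn by (simp add: s_def)
    then show ?thesis by simp
  qed
  finally show ?thesis using clip_id[of s t] s0_nn s0_le1 eqE by (simp add: s_def)
qed

lemma comp_bad:
  "emeasure (U01 \<Otimes>\<^sub>M U01) {p. inEend \<sigma> u (fst p) \<or> (s0m \<sigma> = 0 \<and> \<not> inHop \<sigma> u (fst p))} = 0"
proof -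
  interpret U: prob_space U01 by (rule U01_prob)
  interpret P: pair_prob_space U01 U01 ..
  have fr: "finite_ranked_partition \<sigma>" by (rule frp)
  define X where "X = Eend \<sigma> u \<union> (if s0 \<sigma> = 0 then - Hop \<sigma> u else {})"
  have E[measurable]: "Eend \<sigma> u \<in> sets borel"
    using null_setsD2[OF finite_imp_null_set_lborel[OF finite_Eend]] by simp
  have X[measurable]: "X \<in> sets borel"
    unfolding X_def by (auto intro!: sets.Un simp: sets.compl_sets)
  have eq: "{p. inEend \<sigma> u (fst p) \<or> (s0m \<sigma> = 0 \<and> \<not> inHop \<sigma> u (fst p))} = X \<times> UNIV"
    by (auto simp: X_def frp_inEend[OF fr] frp_inHop[OF fr] frp_s0m[OF fr])
  have "emeasure U01 X \<le> emeasure U01 (Eend \<sigma> u) + emeasure U01 (if s0 \<sigma> = 0 then - Hop \<sigma> u else {})"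
    unfolding X_def using finite_Eend
    by (intro emeasure_subadditive) (auto simp: sets.compl_sets)
  also have "emeasure U01 (Eend \<sigma> u) = 0"
  proof -
    have "emeasure lborel ({0..1} \<inter> Eend \<sigma> u) = 0"
      using finite_Eend by (intro emeasure_lborel_countable) (auto intro: countable_finite)
    then show ?thesis by (simp add: emeasure_U01)
  qed
  also have "emeasure U01 (if s0 \<sigma> = 0 then - Hop \<sigma> u else {}) = 0"
  proof (cases "s0 \<sigma> = 0")
    case True
    have "emeasure U01 (- Hop \<sigma> u) = ennreal (measure U01 (- Hop \<sigma> u))"
      by (rule U01_emeasure_eq) measurable
    then show ?thesis using True measure_U01_nHop by simp
  qed simp
  finally have X0: "emeasure U01 X = 0" by simp
  have "emeasure (U01 \<Otimes>\<^sub>M U01) (X \<times> UNIV) = emeasure U01 X * emeasure U01 UNIV"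
    by (rule U.emeasure_pair_measure_Times) auto
  then show ?thesis unfolding eq X0 by simp
qed

end

lemma space_P4[simp]: "space P4 = UNIV"
  by (simp add: space_pair_measure space_PiM PiE_UNIV_domain)

context L9 begin

definition Uf :: "'a \<Rightarrow> real" where
  "Uf \<omega> = Ut (s \<omega>) (\<lambda>k. Us k \<omega>) (V \<omega>) (Vs 0 \<omega>)"

lemma T4_meas[measurable]: "(\<lambda>\<omega>. (s \<omega>, (\<lambda>k. Us k \<omega>), V \<omega>, Vs 0 \<omega>)) \<in> M \<rightarrow>\<^sub>M P4"
  by (intro measurable_Pair) auto

lemma Uf_meas[measurable]: "Uf \<in> borel_measurable M"
proof -
  have "(\<lambda>x. Ut (fst x) (fst (snd x)) (fst (snd (snd x))) (snd (snd (snd x)))) \<circ>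
        (\<lambda>\<omega>. (s \<omega>, (\<lambda>k. Us k \<omega>), V \<omega>, Vs 0 \<omega>)) \<in> borel_measurable M"
    by (rule measurable_comp[OF T4_meas meas_Ut4])
  then show ?thesis by (simp add: comp_def Uf_def[abs_def])
qed

definition goodU :: "'a \<Rightarrow> bool" where
  "goodU \<omega> \<longleftrightarrow> (\<forall>i j. i \<noteq> j \<longrightarrow> Us i \<omega> \<noteq> Us j \<omega>) \<and> (\<forall>i. 0 < Us i \<omega> \<and> Us i \<omega> < 1)"

lemma AE_goodU: "AE \<omega> in M. goodU \<omega>"
proof -
  have "AE \<omega> in M. \<forall>i. \<forall>j. i \<noteq> j \<longrightarrow> Us i \<omega> \<noteq> Us j \<omega>"
    using AE_distinct by (auto simp: AE_all_countable)
  moreover have "AE \<omega> in M. \<forall>i. 0 < Us i \<omega> \<and> Us i \<omega> < 1"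
    using AE_unif[OF rv_Us dU] by (auto simp: AE_all_countable)
  ultimately show ?thesis unfolding goodU_def by eventually_elim auto
qed

lemma det_good: "\<omega> \<in> space M \<Longrightarrow> goodU \<omega>' \<Longrightarrow> det (s \<omega>) (\<lambda>k. Us k \<omega>')"
  unfolding det_def goodU_def using frp_all by (auto simp: inj_on_def)

lemma prob_Uf_le: "emeasure M {\<omega>\<in>space M. Uf \<omega> \<le> t} = ennreal (cl t)"
proof -
  define At where "At = {x\<in>space P4. Ut (fst x) (fst (snd x)) (fst (snd (snd x))) (snd (snd (snd x))) \<le> t}"
  have At: "At \<in> sets P4" unfolding At_def by (rule sets_At)
  have "{\<omega>\<in>space M. Uf \<omega> \<le> t} = {\<omega>\<in>space M. (s \<omega>, (\<lambda>k. Us k \<omega>), V \<omega>, Vs 0 \<omega>) \<in> At}"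
    by (auto simp: At_def Uf_def)
  also have "emeasure M \<dots> = ennreal (cl t)"
  proof (rule fub_const[OF At AE_goodU])
    fix \<omega> \<omega>' assume w: "\<omega> \<in> space M" "\<omega>' \<in> space M" "goodU \<omega>'"
    interpret D: det "s \<omega>" "\<lambda>k. Us k \<omega>'" by (rule det_good[OF w(1) w(3)])
    have "{p. (s \<omega>, (\<lambda>k. Us k \<omega>'), p) \<in> At} = {p. Ut (s \<omega>) (\<lambda>k. Us k \<omega>') (fst p) (snd p) \<le> t}"
      by (auto simp: At_def)
    then show "emeasure (U01 \<Otimes>\<^sub>M U01) {p. (s \<omega>, (\<lambda>k. Us k \<omega>'), p) \<in> At} = ennreal (cl t)"
      using D.comp_U by simp
  qed
  finally show ?thesis .
qed

lemma distr_Uf: "distr M borel Uf = U01"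
proof (rule cdf_unique)
  show "real_distribution (distr M borel Uf)"
    unfolding real_distribution_def real_distribution_axioms_def
    by (auto intro: prob_space_distr)
  show "real_distribution U01"
    unfolding real_distribution_def real_distribution_axioms_def using U01_prob by auto
  show "cdf (distr M borel Uf) = cdf U01"
  proof
    fix t
    have "cdf (distr M borel Uf) t = measure M (Uf -` {..t} \<inter> space M)"
      unfolding cdf_def by (subst measure_distr) auto
    also have "Uf -` {..t} \<inter> space M = {\<omega>\<in>space M. Uf \<omega> \<le> t}" by auto
    also have "measure M \<dots> = cl t"
    proof -
      have "ennreal (measure M {\<omega>\<in>space M. Uf \<omega> \<le> t}) = ennreal (cl t)"
        using prob_Uf_le[of t] emeasure_eq_measure[of "{\<omega>\<in>space M. Uf \<omega> \<le> t}"] by simp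
      then show ?thesis by (subst (asm) ennreal_inj) (auto simp: cl_def)
    qed
    also have "\<dots> = cdf U01 t" by (simp add: cdf_def measure_U01_atMost)
    finally show "cdf (distr M borel Uf) t = cdf U01 t" .
  qed
qed

lemma AE_notbad: "AE \<omega> in M. \<not> (inEend (s \<omega>) (\<lambda>k. Us k \<omega>) (V \<omega>) \<or>
    (s0m (s \<omega>) = 0 \<and> \<not> inHop (s \<omega>) (\<lambda>k. Us k \<omega>) (V \<omega>)))"
proof -
  define Ab where "Ab = {x\<in>space P4. inEend (fst x) (fst (snd x)) (fst (snd (snd x))) \<or>
     (s0m (fst x) = 0 \<and> \<not> inHop (fst x) (fst (snd x)) (fst (snd (snd x))))}"
  have Ab: "Ab \<in> sets P4" unfolding Ab_def by (rule sets_Abad)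
  define N where "N = {\<omega>\<in>space M. (s \<omega>, (\<lambda>k. Us k \<omega>), V \<omega>, Vs 0 \<omega>) \<in> Ab}"
  have "emeasure M N = 0"
    unfolding N_def
  proof (rule fub_const[OF Ab AE_goodU])
    fix \<omega> \<omega>' assume w: "\<omega> \<in> space M" "\<omega>' \<in> space M" "goodU \<omega>'"
    interpret D: det "s \<omega>" "\<lambda>k. Us k \<omega>'" by (rule det_good[OF w(1) w(3)])
    have "{p. (s \<omega>, (\<lambda>k. Us k \<omega>'), p) \<in> Ab} =
       {p. inEend (s \<omega>) (\<lambda>k. Us k \<omega>') (fst p) \<or> (s0m (s \<omega>) = 0 \<and> \<not> inHop (s \<omega>) (\<lambda>k. Us k \<omega>') (fst p))}"
      by (auto simp: Ab_def)
    then show "emeasure (U01 \<Otimes>\<^sub>M U01) {p. (s \<omega>, (\<lambda>k. Us k \<omega>'), p) \<in> Ab} = 0"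
      using D.comp_bad by simp
  qed
  moreover have "N \<in> sets M" unfolding N_def using T4_meas Ab by measurable
  ultimately have "N \<in> null_sets M" by auto
  then show ?thesis by (rule AE_I') (auto simp: N_def Ab_def)
qed

lemma AE_Vs: "AE \<omega> in M. \<forall>j. 0 \<le> Vs j \<omega> \<and> Vs j \<omega> < 1"
proof -
  have "AE \<omega> in M. \<forall>j. 0 < Vs j \<omega> \<and> Vs j \<omega> < 1"
    by (rule AE_all_countable[THEN iffD2]) (intro allI AE_unif[OF rv_Vs dVs])
  then show ?thesis by (rule eventually_mono) (auto simp: less_imp_le)
qed

lemma main:
  "AE \<omega> in M. Uf \<omega> < dust (bridge (s \<omega>) (\<lambda>k. Us k \<omega>)) (\<lambda>k. Vs k \<omega>)
                  \<longleftrightarrow> V \<omega> \<notin> hole_union (bridge (s \<omega>) (\<lambda>k. Us k \<omega>))"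
  using AE_goodU AE_slln AE_Vs AE_notbad AE_space
proof eventually_elim
  case (elim \<omega>)
  interpret D: detv "s \<omega>" "\<lambda>k. Us k \<omega>" "\<lambda>k. Vs k \<omega>"
    unfolding detv_def detv_axioms_def using det_good[OF elim(5) elim(1)] elim(2,3) by auto
  have fr: "finite_ranked_partition (s \<omega>)" using frp_all elim(5) by auto
  have nE: "V \<omega> \<notin> Eend (s \<omega>) (\<lambda>k. Us k \<omega>)" using elim(4) by (simp add: frp_inEend[OF fr])
  have hole: "V \<omega> \<in> hole_union (bridge (s \<omega>) (\<lambda>k. Us k \<omega>)) \<longleftrightarrow> V \<omega> \<in> Hop (s \<omega>) (\<lambda>k. Us k \<omega>)"
    by (rule D.hole_iff[OF nE])
  have W: "0 \<le> Vs 0 \<omega>" "Vs 0 \<omega> < 1" using elim(3) by auto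
  have s0: "0 \<le> s0 (s \<omega>)" "s0 (s \<omega>) \<le> 1" using D.s0_nn D.s0_le1 by auto
  show ?case
  proof (cases "V \<omega> \<in> Hop (s \<omega>) (\<lambda>k. Us k \<omega>)")
    case True
    then have "Uf \<omega> = s0 (s \<omega>) + (1 - s0 (s \<omega>)) * Vs 0 \<omega>"
      by (simp add: Uf_def Ut_def frp_inHop[OF fr] frp_s0m[OF fr])
    moreover have "0 \<le> (1 - s0 (s \<omega>)) * Vs 0 \<omega>" using W s0 by simp
    ultimately show ?thesis using True hole D.dust_eq by simp
  next
    case False
    then have "s0 (s \<omega>) \<noteq> 0" using elim(4) by (simp add: frp_inHop[OF fr] frp_s0m[OF fr])
    then have pos: "0 < s0 (s \<omega>)" using s0 by simp
    have "Uf \<omega> = s0 (s \<omega>) * Vs 0 \<omega>"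
      using False by (simp add: Uf_def Ut_def frp_inHop[OF fr] frp_s0m[OF fr])
    moreover have "s0 (s \<omega>) * Vs 0 \<omega> < s0 (s \<omega>)" using pos W by simp
    ultimately show ?thesis using False hole D.dust_eq by simp
  qed
qed

end


theorem lemma9:
  fixes M :: "'a measure"
    and s :: "'a \<Rightarrow> nat \<Rightarrow> real"
    and Us Vs :: "nat \<Rightarrow> 'a \<Rightarrow> real"
    and V :: "'a \<Rightarrow> real"
  assumes "prob_space M"
    and "s \<in> M \<rightarrow>\<^sub>M PiM UNIV (\<lambda>_. borel)"
    and "\<forall>\<omega>\<in>space M. finite_ranked_partition (s \<omega>)"
    and "\<And>k. distr M borel (Us k) = uniform_measure lborel {0..1}"
    and "\<And>k. distr M borel (Vs k) = uniform_measure lborel {0..1}"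
    and "distr M borel V = uniform_measure lborel {0..1}"
    and "prob_space.indep_vars M (\<lambda>_. borel) (rvfam Us Vs V) UNIV"
    and "prob_space.indep_set M
           {s -` A \<inter> space M | A. A \<in> sets (PiM UNIV (\<lambda>_::nat. borel :: real measure))}
           {(\<lambda>\<omega> i. rvfam Us Vs V i \<omega>) -` A \<inter> space M | A.
              A \<in> sets (PiM UNIV (\<lambda>_::ridx. borel :: real measure))}"
  shows "\<exists>U. U \<in> borel_measurable M \<and> distr M borel U = uniform_measure lborel {0..1} \<and>
           (AE \<omega> in M. U \<omega> < dust (bridge (s \<omega>) (\<lambda>k. Us k \<omega>)) (\<lambda>k. Vs k \<omega>)
                  \<longleftrightarrow> V \<omega> \<notin> hole_union (bridge (s \<omega>) (\<lambda>k. Us k \<omega>)))"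
proof -
  have "L9 M s Us Vs V"
    unfolding L9_def L9_axioms_def using assms by auto
  then interpret L: L9 M s Us Vs V .
  show ?thesis using L.Uf_meas L.distr_Uf L.main by blast
qed

end
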